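(* For every $1\leq p\leq\infty$, the class $\Pi^{\widehat{\mathcal{B}}}_p$ (whose component for each complex Banach space $X$ is $\Pi^{\widehat{\mathcal{B}}}_p(\mathbb{D},X)$), together with the function $\pi^{\mathcal{B}}_p$, is an injective Banach normalized Bloch ideal.
   Context: $\mathbb{D}=\{z\in\mathbb{C}:|z|<1\}$. For a complex Banach space $X$, $\mathcal{H}(\mathbb{D},X)$ is the space of holomorphic maps $\mathbb{D}\to X$; $p_{\mathcal{B}}(f)=\sup_{z\in\mathbb{D}}(1-|z|^2)\|f'(z)\|$; $\widehat{\mathcal{B}}(\mathbb{D},X)$ is the Banach space (norm $p_{\mathcal{B}}$) of $f\in\mathcal{H}(\mathbb{D},X)$ with $p_{\mathcal{B}}(f)<\infty$ and $f(0)=0$; $\widehat{\mathcal{B}}(\mathbb{D})=\widehat{\mathcal{B}}(\mathbb{D},\mathbb{C})$ with closed unit ball $B_{\widehat{\mathcal{B}}(\mathbb{D})}$. For $1\leq p<\infty$, $f\in\mathcal{H}(\mathbb{D},X)$ is $p$-summing Bloch if there is $c\geq0$ with $\left(\sum_{i=1}^n|\lambda_i|^p\|f'(z_i)\|^p\right)^{1/p}\leq c\sup_{g\in B_{\widehat{\mathcal{B}}(\mathbb{D})}}\left(\sum_{i=1}^n|\lambda_i|^p|g'(z_i)|^p\right)^{1/p}$ for all $n\in\mathbb{N}$, $\lambda_i\in\mathbb{C}$, $z_i\in\mathbb{D}$; for $p=\infty$ the condition is $\max_i|\lambda_i|\|f'(z_i)\|\leq c\sup_{g\in B_{\widehat{\mathcal{B}}(\mathbb{D})}}\max_i|\lambda_i||g'(z_i)|$.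 The least such $c$ is $\pi^{\mathcal{B}}_p(f)$. $\Pi^{\widehat{\mathcal{B}}}_p(\mathbb{D},X)$ is the space of $p$-summing Bloch maps $f:\mathbb{D}\to X$ with $f(0)=0$. A normalized Bloch ideal is an assignment $\mathcal{I}$ to each complex Banach space $X$ of a set $\mathcal{I}(\mathbb{D},X)\subseteq\widehat{\mathcal{B}}(\mathbb{D},X)$ such that: (I1) $\mathcal{I}(\mathbb{D},X)$ is a linear subspace; (I2) for every $g\in\widehat{\mathcal{B}}(\mathbb{D})$ and $x\in X$, the map $g\cdot x: z\mapsto g(z)x$ lies in $\mathcal{I}(\mathbb{D},X)$; (I3) if $f\in\mathcal{I}(\mathbb{D},X)$, $h:\mathbb{D}\to\mathbb{D}$ is holomorphic with $h(0)=0$, and $T:X\to Y$ is a bounded linear operator into a complex Banach space $Y$, then $T\circ f\circ h\in\mathcal{I}(\mathbb{D},Y)$. It is a Banach (resp. normed) normalized Bloch ideal with respect to a function $\|\cdot\|_{\mathcal{I}}$ if for every $X$: (N1) $(\mathcal{I}(\mathbb{D},X),\|\cdot\|_{\mathcal{I}})$ is a Banach (resp. normed) space with $p_{\mathcal{B}}(f)\leq\|f\|_{\mathcal{I}}$; (N2) $\|g\cdot x\|_{\mathcal{I}}=p_{\mathcal{B}}(g)\|x\|$ for all $g\in\widehat{\mathcal{B}}(\mathbb{D})$, $x\in X$; (N3) for $h,f,T$ as in (I3), $\|T\circ f\circ h\|_{\mathcal{I}}\leq\|T\|\|f\|_{\mathcal{I}}$. It is injective if for every $f\in\widehat{\mathcal{B}}(\mathbb{D},X)$,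 every complex Banach space $Y$ and every linear isometric embedding $\iota:X\to Y$ with $\iota\circ f\in\mathcal{I}(\mathbb{D},Y)$, one has $f\in\mathcal{I}(\mathbb{D},X)$ and $\|f\|_{\mathcal{I}}=\|\iota\circ f\|_{\mathcal{I}}$. *)

theory Defs
  imports "HOL-Complex_Analysis.Complex_Analysis"
begin

text \<open>The distribution has no class of complex normed vector spaces, so we add
  one: a real Banach space with a complex scalar multiplication extending the real
  one and satisfying the vector space and norm axioms.\<close>

class complex_banach = banach +
  fixes cscale :: "complex \<Rightarrow> 'a \<Rightarrow> 'a"  (infixr \<open>*\<^sub>C\<close> 75)
  assumes cscale_add_right: "a *\<^sub>C (x + y) = a *\<^sub>C x + a *\<^sub>C y"
    and cscale_add_left: "(a + b) *\<^sub>C x = a *\<^sub>C x + b *\<^sub>C x"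
    and cscale_cscale: "a *\<^sub>C (b *\<^sub>C x) = (a * b) *\<^sub>C x"
    and cscale_of_real: "complex_of_real r *\<^sub>C x = r *\<^sub>R x"
    and norm_cscale: "norm (a *\<^sub>C x) = cmod a * norm x"

instantiation complex :: complex_banach
begin
definition cscale_complex :: "complex \<Rightarrow> complex \<Rightarrow> complex" where
  "cscale_complex a x = a * x"
instance
  by standard (auto simp: cscale_complex_def algebra_simps norm_mult scaleR_conv_of_real)
end

abbreviation disc :: "complex set" where "disc \<equiv> ball 0 1"

definition has_cderiv :: "(complex \<Rightarrow> 'a::complex_banach) \<Rightarrow> 'a \<Rightarrow> complex \<Rightarrow> bool" where
  "has_cderiv f d z \<longleftrightarrow> (f has_derivative (\<lambda>h. h *\<^sub>C d)) (at z)"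

definition vholo :: "(complex \<Rightarrow> 'a::complex_banach) \<Rightarrow> bool" where
  "vholo f \<longleftrightarrow> (\<forall>z\<in>disc. \<exists>d. has_cderiv f d z)"

definition cderiv :: "(complex \<Rightarrow> 'a::complex_banach) \<Rightarrow> complex \<Rightarrow> 'a" where
  "cderiv f z = (SOME d. has_cderiv f d z)"

definition bloch_seminorm :: "(complex \<Rightarrow> 'a::complex_banach) \<Rightarrow> real" where
  "bloch_seminorm f = (SUP z\<in>disc. (1 - (cmod z)\<^sup>2) * norm (cderiv f z))"

definition BlochHat :: "(complex \<Rightarrow> 'a::complex_banach) set" where
  "BlochHat = {f. vholo f \<and> f 0 = 0 \<and>
      bdd_above ((\<lambda>z. (1 - (cmod z)\<^sup>2) * norm (cderiv f z)) ` disc)}"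

text \<open>\<open>\<ell>_p\<close>-norm of the finite family \<open>a 0, ..., a (n-1)\<close>; for \<open>p = \<infinity>\<close> the maximum
  (with \<open>0\<close> inserted so that \<open>n = 0\<close> is harmless).\<close>
definition lpn :: "ereal \<Rightarrow> (nat \<Rightarrow> real) \<Rightarrow> nat \<Rightarrow> real" where
  "lpn p a n = (if p = \<infinity> then Max (insert 0 ((\<lambda>i. \<bar>a i\<bar>) ` {..<n}))
                else (\<Sum>i<n. \<bar>a i\<bar> powr real_of_ereal p) powr (1 / real_of_ereal p))"

definition psum_cond :: "ereal \<Rightarrow> (complex \<Rightarrow> 'a::complex_banach) \<Rightarrow> real \<Rightarrow> bool" where
  "psum_cond p f c \<longleftrightarrow>
     (\<forall>n (lam :: nat \<Rightarrow> complex) (zs :: nat \<Rightarrow> complex). (\<forall>i<n. zs i \<in> disc) \<longrightarrow>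
        lpn p (\<lambda>i. cmod (lam i) * norm (cderiv f (zs i))) n
          \<le> c * (SUP g\<in>{g :: complex \<Rightarrow> complex. g \<in> BlochHat \<and> bloch_seminorm g \<le> 1}.
                   lpn p (\<lambda>i. cmod (lam i) * cmod (cderiv g (zs i))) n))"

definition PiB :: "ereal \<Rightarrow> (complex \<Rightarrow> 'a::complex_banach) set" where
  "PiB p = {f. vholo f \<and> f 0 = 0 \<and> (\<exists>c\<ge>0. psum_cond p f c)}"

definition piB :: "ereal \<Rightarrow> (complex \<Rightarrow> 'a::complex_banach) \<Rightarrow> real" where
  "piB p f = Inf {c. c \<ge> 0 \<and> psum_cond p f c}"

text \<open>Maps \<open>\<D> \<rightarrow> X\<close> are represented by total functions \<open>complex \<Rightarrow> X\<close> whose values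
  off the disc are irrelevant; accordingly "\<open>f = 0\<close>" means "\<open>f\<close> vanishes on \<open>\<D>\<close>".\<close>

definition cbounded_linear :: "('a::complex_banach \<Rightarrow> 'b::complex_banach) \<Rightarrow> bool" where
  "cbounded_linear T \<longleftrightarrow> bounded_linear T \<and> (\<forall>a x. T (a *\<^sub>C x) = a *\<^sub>C T x)"

definition banach_bloch_ideal_on ::
  "(complex \<Rightarrow> 'a::complex_banach) set \<Rightarrow> ((complex \<Rightarrow> 'a) \<Rightarrow> real) \<Rightarrow> bool" where
  "banach_bloch_ideal_on I nI \<longleftrightarrow>
     \<comment> \<open>inclusion in \<open>\<B>^(\<D>,X)\<close>\<close>
     I \<subseteq> BlochHat \<and>
     \<comment> \<open>(I1) linear subspace\<close>
     (\<lambda>z. 0) \<in> I \<and> (\<forall>f\<in>I. \<forall>g\<in>I. (\<lambda>z. f z + g z) \<in> I) \<and>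
     (\<forall>a. \<forall>f\<in>I. (\<lambda>z. a *\<^sub>C f z) \<in> I) \<and>
     \<comment> \<open>(I2)\<close>
     (\<forall>g :: complex \<Rightarrow> complex. \<forall>x :: 'a. g \<in> BlochHat \<longrightarrow> (\<lambda>z. g z *\<^sub>C x) \<in> I) \<and>
     \<comment> \<open>(N1) normed space\<close>
     (\<forall>f\<in>I. nI f = 0 \<longleftrightarrow> (\<forall>z\<in>disc. f z = 0)) \<and>
     (\<forall>f\<in>I. \<forall>g\<in>I. nI (\<lambda>z. f z + g z) \<le> nI f + nI g) \<and>
     (\<forall>a. \<forall>f\<in>I. nI (\<lambda>z. a *\<^sub>C f z) = cmod a * nI f) \<and>
     \<comment> \<open>(N1) completeness\<close>
     (\<forall>s :: nat \<Rightarrow> complex \<Rightarrow> 'a. (\<forall>n. s n \<in> I) \<and>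
        (\<forall>e>0. \<exists>N. \<forall>m\<ge>N. \<forall>n\<ge>N. nI (\<lambda>z. s m z - s n z) < e) \<longrightarrow>
        (\<exists>f\<in>I. \<forall>e>0. \<exists>N. \<forall>n\<ge>N. nI (\<lambda>z. s n z - f z) < e)) \<and>
     \<comment> \<open>(N1) domination of the Bloch norm\<close>
     (\<forall>f\<in>I. bloch_seminorm f \<le> nI f) \<and>
     \<comment> \<open>(N2)\<close>
     (\<forall>g :: complex \<Rightarrow> complex. \<forall>x :: 'a. g \<in> BlochHat \<longrightarrow>
        nI (\<lambda>z. g z *\<^sub>C x) = bloch_seminorm g * norm x)"

definition bloch_ideal_compose ::
  "(complex \<Rightarrow> 'a::complex_banach) set \<Rightarrow> ((complex \<Rightarrow> 'a) \<Rightarrow> real) \<Rightarrow>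
   (complex \<Rightarrow> 'b::complex_banach) set \<Rightarrow> ((complex \<Rightarrow> 'b) \<Rightarrow> real) \<Rightarrow> bool" where
  "bloch_ideal_compose IX nX IY nY \<longleftrightarrow>
     (\<forall>f\<in>IX. \<forall>h T. h holomorphic_on disc \<and> h ` disc \<subseteq> disc \<and> h 0 = 0 \<and>
        cbounded_linear (T :: 'a \<Rightarrow> 'b) \<longrightarrow>
        T \<circ> f \<circ> h \<in> IY \<and> nY (T \<circ> f \<circ> h) \<le> onorm T * nX f)"

definition bloch_ideal_injective ::
  "(complex \<Rightarrow> 'a::complex_banach) set \<Rightarrow> ((complex \<Rightarrow> 'a) \<Rightarrow> real) \<Rightarrow>
   (complex \<Rightarrow> 'b::complex_banach) set \<Rightarrow> ((complex \<Rightarrow> 'b) \<Rightarrow> real) \<Rightarrow> bool" where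
  "bloch_ideal_injective IX nX IY nY \<longleftrightarrow>
     (\<forall>f\<in>BlochHat. \<forall>\<iota> :: 'a \<Rightarrow> 'b. cbounded_linear \<iota> \<and> (\<forall>x. norm (\<iota> x) = norm x) \<and>
        \<iota> \<circ> f \<in> IY \<longrightarrow> f \<in> IX \<and> nX f = nY (\<iota> \<circ> f))"

end

theory Submission
  imports Defs
begin

lemma cscale_one[simp]: "(1::complex) *\<^sub>C x = x"
  using cscale_of_real[of 1 x] by simp

lemma cscale_zero_left[simp]: "(0::complex) *\<^sub>C x = 0"
  using cscale_of_real[of 0 x] by simp

lemma cscale_zero_right[simp]: "a *\<^sub>C (0::'a::complex_banach) = 0"
  using cscale_add_right[of a 0 0] by simp

lemma cscale_minus_right: "a *\<^sub>C (- x) = - (a *\<^sub>C (x::'a::complex_banach))"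
proof -
  have "a *\<^sub>C x + a *\<^sub>C (- x) = 0" using cscale_add_right[of a x "-x"] by simp
  then show ?thesis by (metis minus_unique)
qed

lemma cscale_diff_right: "a *\<^sub>C (x - y) = a *\<^sub>C x - a *\<^sub>C (y::'a::complex_banach)"
  by (metis cscale_add_right cscale_minus_right diff_conv_add_uminus)

lemma cscale_minus_left: "(- a) *\<^sub>C x = - (a *\<^sub>C (x::'a::complex_banach))"
proof -
  have "a *\<^sub>C x + (- a) *\<^sub>C x = 0" using cscale_add_left[of a "-a" x] by simp
  then show ?thesis by (metis minus_unique)
qed

lemma cscale_diff_left: "(a - b) *\<^sub>C x = a *\<^sub>C x - b *\<^sub>C (x::'a::complex_banach)"
  by (metis cscale_add_left cscale_minus_left diff_conv_add_uminus)

lemma cscale_scaleR_right: "a *\<^sub>C (r *\<^sub>R x) = r *\<^sub>R (a *\<^sub>C (x::'a::complex_banach))"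
  by (metis cscale_cscale cscale_of_real mult.commute)

lemma cscale_minus_one[simp]: "(-1::complex) *\<^sub>C x = - (x::'a::complex_banach)"
  by (simp add: cscale_minus_left)

lemma bounded_linear_cscale_right: "bounded_linear (\<lambda>x::'a::complex_banach. a *\<^sub>C x)"
  by (rule bounded_linear_intro[where K="cmod a"])
     (auto simp: cscale_add_right cscale_scaleR_right norm_cscale mult.commute)

lemma bounded_linear_cscale_left: "bounded_linear (\<lambda>h::complex. h *\<^sub>C (x::'a::complex_banach))"
proof (rule bounded_linear_intro[where K="norm x"])
  show "(b1 + b2) *\<^sub>C x = b1 *\<^sub>C x + b2 *\<^sub>C x" for b1 b2 by (rule cscale_add_left)
  show "(r *\<^sub>R b) *\<^sub>C x = r *\<^sub>R (b *\<^sub>C x)" for r b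
    by (simp add: scaleR_conv_of_real cscale_cscale[symmetric] cscale_of_real)
  show "norm (b *\<^sub>C x) \<le> norm b * norm x" for b by (simp add: norm_cscale)
qed

lemma cscale_complex[simp]: "a *\<^sub>C (b::complex) = a * b"
  by (simp add: cscale_complex_def)

lemma onorm_cscale_left: "onorm (\<lambda>h::complex. h *\<^sub>C (x::'a::complex_banach)) \<le> norm x"
  by (rule onorm_le) (simp add: norm_cscale)

lemma has_cderiv_unique:
  assumes "has_cderiv f d z" "has_cderiv f e z" shows "d = e"
proof -
  have "(\<lambda>h. h *\<^sub>C d) = (\<lambda>h. h *\<^sub>C e)"
    using assms unfolding has_cderiv_def by (rule has_derivative_unique)
  then have "1 *\<^sub>C d = 1 *\<^sub>C e" by (rule fun_cong)
  then show ?thesis by simp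
qed

lemma cderiv_eq: assumes "has_cderiv f d z" shows "cderiv f z = d"
proof -
  have "has_cderiv f (SOME d. has_cderiv f d z) z" using assms by (rule someI)
  then show ?thesis unfolding cderiv_def using assms by (rule has_cderiv_unique)
qed

lemma vholo_has_cderiv: assumes "vholo f" "z \<in> disc" shows "has_cderiv f (cderiv f z) z"
proof -
  obtain d where "has_cderiv f d z" using assms unfolding vholo_def by blast
  then show ?thesis unfolding cderiv_def by (rule someI)
qed

lemma has_cderiv_transform:
  assumes "has_cderiv f d z" "z \<in> disc" "\<And>w. w \<in> disc \<Longrightarrow> f w = g w"
  shows "has_cderiv g d z"
  unfolding has_cderiv_def
proof (rule has_derivative_transform_within_open[of f _ z UNIV disc])
  show "(f has_derivative (\<lambda>h. h *\<^sub>C d)) (at z)" using assms(1) unfolding has_cderiv_def .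
qed (use assms in auto)

lemma has_cderiv_const: "has_cderiv (\<lambda>z. c) 0 z"
  unfolding has_cderiv_def by simp

lemma has_cderiv_add:
  "has_cderiv f d z \<Longrightarrow> has_cderiv g e z \<Longrightarrow> has_cderiv (\<lambda>w. f w + g w) (d + e) z"
  unfolding has_cderiv_def by (drule (1) has_derivative_add) (simp add: cscale_add_right)

lemma has_cderiv_diff:
  "has_cderiv f d z \<Longrightarrow> has_cderiv g e z \<Longrightarrow> has_cderiv (\<lambda>w. f w - g w) (d - e) z"
  unfolding has_cderiv_def by (drule (1) has_derivative_diff) (simp add: cscale_diff_right)

lemma has_cderiv_linear:
  assumes "has_cderiv f d z" "cbounded_linear T"
  shows "has_cderiv (\<lambda>w. T (f w)) (T d) z"
proof -
  have bl: "bounded_linear T" and h: "\<And>a x. T (a *\<^sub>C x) = a *\<^sub>C T x"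
    using assms(2) unfolding cbounded_linear_def by auto
  have "((\<lambda>w. T (f w)) has_derivative (\<lambda>h. T (h *\<^sub>C d))) (at z)"
    using bounded_linear.has_derivative[OF bl] assms(1) unfolding has_cderiv_def by blast
  then show ?thesis unfolding has_cderiv_def h .
qed

lemma cbounded_linear_cscale: "cbounded_linear (\<lambda>x::'a::complex_banach. a *\<^sub>C x)"
  unfolding cbounded_linear_def
  by (simp add: bounded_linear_cscale_right cscale_cscale mult.commute)

lemma has_cderiv_cscale:
  "has_cderiv f d z \<Longrightarrow> has_cderiv (\<lambda>w. a *\<^sub>C f w) (a *\<^sub>C d) z"
  using has_cderiv_linear[OF _ cbounded_linear_cscale] .

lemma has_cderiv_complex: "has_cderiv g d z \<longleftrightarrow> (g has_field_derivative d) (at z)"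
proof -
  have "(\<lambda>h. h *\<^sub>C d) = (*) d" by (rule ext) (simp add: mult.commute)
  then show ?thesis unfolding has_cderiv_def has_field_derivative_def by simp
qed

lemma has_cderiv_scal:
  assumes "has_cderiv (g::complex\<Rightarrow>complex) d z"
  shows "has_cderiv (\<lambda>w. g w *\<^sub>C x) (d *\<^sub>C x) z"
proof -
  have "((\<lambda>w. g w *\<^sub>C x) has_derivative (\<lambda>h. (h *\<^sub>C d) *\<^sub>C x)) (at z)"
    using bounded_linear.has_derivative[OF bounded_linear_cscale_left] assms
    unfolding has_cderiv_def by blast
  then show ?thesis unfolding has_cderiv_def by (simp add: cscale_cscale)
qed

lemma has_cderiv_comp:
  assumes "(h has_field_derivative h') (at z)" "has_cderiv f d (h z)"
  shows "has_cderiv (\<lambda>w. f (h w)) (h' *\<^sub>C d) z"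
proof -
  have "((\<lambda>w. f (h w)) has_derivative (\<lambda>k. (h' * k) *\<^sub>C d)) (at z)"
    using has_derivative_compose[of h "(*) h'" z UNIV f "\<lambda>h. h *\<^sub>C d"] assms
    unfolding has_cderiv_def has_field_derivative_def by simp
  then show ?thesis unfolding has_cderiv_def by (simp add: cscale_cscale mult.commute)
qed

section \<open>Finite lp norms\<close>

lemma powr_convex_nonneg:
  fixes x y t q :: real
  assumes "1 \<le> q" "0 \<le> x" "0 \<le> y" "0 \<le> t" "t \<le> 1"
  shows "(t * x + (1 - t) * y) powr q \<le> t * x powr q + (1 - t) * y powr q"
proof -
  have aux: "(s * u) powr q \<le> s * u powr q" if "0 \<le> s" "s \<le> 1" "0 \<le> u" for s u :: real
  proof -
    have "(s * u) powr q = s powr q * u powr q" using that by (simp add: powr_mult)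
    also have "s powr q \<le> s powr 1" using that assms(1) by (intro powr_mono') auto
    then have "s powr q * u powr q \<le> s powr 1 * u powr q" by (intro mult_right_mono) auto
    also have "s powr 1 = s" using that by simp
    finally show ?thesis .
  qed
  consider "x = 0" | "y = 0" | "x > 0" "y > 0" using assms by linarith
  then show ?thesis
  proof cases
    case 1 then show ?thesis using aux[of "1 - t" y] assms by simp
  next
    case 2 then show ?thesis using aux[of t x] assms by simp
  next
    case 3
    have "(\<lambda>x::real. x powr q) ((1 - (1 - t)) *\<^sub>R x + (1 - t) *\<^sub>R y)
        \<le> (1 - (1 - t)) * x powr q + (1 - t) * y powr q"
      by (rule convex_onD[OF powr_convex[OF assms(1)]]) (use assms 3 in auto)
    then show ?thesis by simp
  qed
qed

lemma sum_powr_zero_iff: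
  fixes a :: "nat \<Rightarrow> real"
  assumes "\<And>i. i < n \<Longrightarrow> 0 \<le> a i" "q > 0"
  shows "(\<Sum>i<n. a i powr q) = 0 \<longleftrightarrow> (\<forall>i<n. a i = 0)"
proof -
  have "(\<Sum>i<n. a i powr q) = 0 \<longleftrightarrow> (\<forall>i\<in>{..<n}. a i powr q = 0)"
    by (rule sum_nonneg_eq_0_iff) auto
  then show ?thesis by auto
qed

lemma minkowski_fin:
  fixes a b :: "nat \<Rightarrow> real" and q :: real
  assumes q: "1 \<le> q" and a: "\<And>i. i < n \<Longrightarrow> 0 \<le> a i" and b: "\<And>i. i < n \<Longrightarrow> 0 \<le> b i"
  shows "(\<Sum>i<n. (a i + b i) powr q) powr (1/q)
         \<le> (\<Sum>i<n. a i powr q) powr (1/q) + (\<Sum>i<n. b i powr q) powr (1/q)"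
proof -
  define SA where "SA = (\<Sum>i<n. a i powr q)"
  define SB where "SB = (\<Sum>i<n. b i powr q)"
  define A where "A = SA powr (1/q)"
  define B where "B = SB powr (1/q)"
  have SA0: "SA \<ge> 0" and SB0: "SB \<ge> 0" unfolding SA_def SB_def by (auto intro: sum_nonneg)
  have A0: "A \<ge> 0" and B0: "B \<ge> 0" unfolding A_def B_def by auto
  have qpos: "q > 0" using q by simp
  have eqA: "(\<Sum>i<n. a i powr q) powr (1/q) = A" unfolding A_def SA_def ..
  have eqB: "(\<Sum>i<n. b i powr q) powr (1/q) = B" unfolding B_def SB_def ..
  have Aq: "A powr q = SA" unfolding A_def using SA0 q by (simp add: powr_powr)
  have Bq: "B powr q = SB" unfolding B_def using SB0 q by (simp add: powr_powr)
  show ?thesis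
  proof (cases "A = 0 \<or> B = 0")
    case True
    then show ?thesis
    proof
      assume "A = 0"
      then have "SA = 0" unfolding A_def using SA0 by simp
      then have "\<forall>i<n. a i = 0" unfolding SA_def using sum_powr_zero_iff[of n a q] a qpos by auto
      then have "(\<Sum>i<n. (a i + b i) powr q) = SB" unfolding SB_def by simp
      then show ?thesis using \<open>A = 0\<close> unfolding eqA eqB B_def by simp
    next
      assume "B = 0"
      then have "SB = 0" unfolding B_def using SB0 by simp
      then have "\<forall>i<n. b i = 0" unfolding SB_def using sum_powr_zero_iff[of n b q] b qpos by auto
      then have "(\<Sum>i<n. (a i + b i) powr q) = SA" unfolding SA_def by simp
      then show ?thesis using \<open>B = 0\<close> unfolding eqA eqB A_def by simp
    qed
  next
    case False
    then have Ap: "A > 0" and Bp: "B > 0" using A0 B0 by auto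
    define t where "t = A / (A + B)"
    have t0: "0 \<le> t" and t1: "t \<le> 1" unfolding t_def using Ap Bp by auto
    have 1: "1 - t = B / (A + B)" unfolding t_def using Ap Bp by (simp add: field_simps)
    have key: "((a i + b i) / (A + B)) powr q \<le> t * (a i / A) powr q + (1 - t) * (b i / B) powr q"
      if "i < n" for i
    proof -
      have e1: "t * (a i / A) = a i / (A + B)" unfolding t_def using Ap by simp
      have e2: "(1 - t) * (b i / B) = b i / (A + B)" unfolding 1 using Bp by simp
      have "(a i + b i) / (A + B) = t * (a i / A) + (1 - t) * (b i / B)"
        unfolding e1 e2 by (simp add: add_divide_distrib)
      then show ?thesis using powr_convex_nonneg[OF q, of "a i / A" "b i / B" t] a[OF that] b[OF that] Ap Bp t0 t1
        by simp
    qed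
    have "(\<Sum>i<n. ((a i + b i) / (A + B)) powr q)
          \<le> (\<Sum>i<n. t * (a i / A) powr q + (1 - t) * (b i / B) powr q)"
      by (rule sum_mono) (use key in auto)
    also have "\<dots> = t * (\<Sum>i<n. a i powr q) / A powr q + (1 - t) * (\<Sum>i<n. b i powr q) / B powr q"
      using a b Ap Bp
      by (simp add: sum.distrib sum_distrib_left sum_divide_distrib powr_divide)
    also have "\<dots> = t * SA / SA + (1 - t) * SB / SB" using Aq Bq unfolding SA_def SB_def by simp
    also have "\<dots> = 1" using Aq Bq Ap Bp by auto
    finally have le1: "(\<Sum>i<n. ((a i + b i) / (A + B)) powr q) \<le> 1" .
    have "(\<Sum>i<n. ((a i + b i) / (A + B)) powr q) = (\<Sum>i<n. (a i + b i) powr q) / (A + B) powr q"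
      using a b Ap Bp by (simp add: sum_divide_distrib powr_divide)
    with le1 have "(\<Sum>i<n. (a i + b i) powr q) \<le> (A + B) powr q"
      using Ap Bp by (simp add: divide_le_eq)
    then have "(\<Sum>i<n. (a i + b i) powr q) powr (1/q) \<le> ((A + B) powr q) powr (1/q)"
      by (intro powr_mono2) (use a b qpos in \<open>auto intro: sum_nonneg\<close>)
    also have "\<dots> = A + B" using Ap Bp q by (simp add: powr_powr)
    finally show ?thesis unfolding eqA eqB .
  qed
qed

lemma p_finite_ge1: "1 \<le> p \<Longrightarrow> p \<noteq> \<infinity> \<Longrightarrow> 1 \<le> real_of_ereal p"
  by (cases p) auto

lemma lpn_inf_le_iff: "lpn \<infinity> a n \<le> M \<longleftrightarrow> 0 \<le> M \<and> (\<forall>i<n. \<bar>a i\<bar> \<le> M)"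
  unfolding lpn_def by auto

lemma lpn_inf_ge: "i < n \<Longrightarrow> \<bar>a i\<bar> \<le> lpn \<infinity> a n"
  unfolding lpn_def by simp

lemma lpn_inf_nonneg: "0 \<le> lpn \<infinity> a n"
  unfolding lpn_def by simp

lemma lpn_nonneg: "0 \<le> lpn p a n"
  using lpn_inf_nonneg[of a n] unfolding lpn_def by (auto split: if_splits)

lemma lpn_fin: "p \<noteq> \<infinity> \<Longrightarrow> lpn p a n = (\<Sum>i<n. \<bar>a i\<bar> powr real_of_ereal p) powr (1 / real_of_ereal p)"
  unfolding lpn_def by simp

lemma lpn_mono:
  assumes p: "1 \<le> p" and le: "\<And>i. i < n \<Longrightarrow> \<bar>a i\<bar> \<le> \<bar>b i\<bar>"
  shows "lpn p a n \<le> lpn p b n"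
proof (cases "p = \<infinity>")
  case True
  show ?thesis unfolding True lpn_inf_le_iff
    using lpn_inf_nonneg[of b n] lpn_inf_ge[of _ n b] le by (auto intro: order_trans)
next
  case False
  define q where "q = real_of_ereal p"
  have q: "1 \<le> q" unfolding q_def using p False by (rule p_finite_ge1)
  show ?thesis unfolding lpn_fin[OF False] q_def[symmetric]
    by (intro powr_mono2 sum_mono) (use q le in \<open>auto intro: sum_nonneg\<close>)
qed

lemma lpn_cong:
  assumes p: "1 \<le> p" and le: "\<And>i. i < n \<Longrightarrow> \<bar>a i\<bar> = \<bar>b i\<bar>"
  shows "lpn p a n = lpn p b n"
  using lpn_mono[OF p, of n a b] lpn_mono[OF p, of n b a] le by force

lemma lpn_scale:
  assumes p: "1 \<le> p" and c: "0 \<le> c"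
  shows "lpn p (\<lambda>i. c * a i) n = c * lpn p a n"
proof (cases "p = \<infinity>")
  case True
  have le: "lpn \<infinity> (\<lambda>i. c * a i) n \<le> c * lpn \<infinity> a n"
    unfolding lpn_inf_le_iff using c lpn_inf_nonneg[of a n] lpn_inf_ge[of _ n a]
    by (auto simp: abs_mult intro: mult_left_mono)
  have ge: "c * lpn \<infinity> a n \<le> lpn \<infinity> (\<lambda>i. c * a i) n"
  proof (cases "c = 0")
    case True then show ?thesis using lpn_inf_nonneg by simp
  next
    case False
    then have cp: "c > 0" using c by simp
    have "lpn \<infinity> a n \<le> lpn \<infinity> (\<lambda>i. c * a i) n / c"
      unfolding lpn_inf_le_iff
    proof (intro conjI allI impI)
      show "0 \<le> lpn \<infinity> (\<lambda>i. c * a i) n / c" using lpn_inf_nonneg cp by simp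
      fix i assume "i < n"
      then have "\<bar>c * a i\<bar> \<le> lpn \<infinity> (\<lambda>i. c * a i) n" by (rule lpn_inf_ge)
      then show "\<bar>a i\<bar> \<le> lpn \<infinity> (\<lambda>i. c * a i) n / c" using cp
        by (simp add: abs_mult pos_le_divide_eq mult.commute)
    qed
    then show ?thesis using cp by (simp add: pos_le_divide_eq mult.commute)
  qed
  show ?thesis using le ge True by simp
next
  case False
  define q where "q = real_of_ereal p"
  have q: "1 \<le> q" unfolding q_def using p False by (rule p_finite_ge1)
  have "(\<Sum>i<n. \<bar>c * a i\<bar> powr q) = c powr q * (\<Sum>i<n. \<bar>a i\<bar> powr q)"
    using c by (simp add: abs_mult powr_mult sum_distrib_left)
  then have "(\<Sum>i<n. \<bar>c * a i\<bar> powr q) powr (1/q) = (c powr q) powr (1/q) * (\<Sum>i<n. \<bar>a i\<bar> powr q) powr (1/q)"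
    using c by (simp add: powr_mult sum_nonneg)
  also have "(c powr q) powr (1/q) = c" using c q by (simp add: powr_powr)
  finally show ?thesis unfolding lpn_fin[OF False] q_def[symmetric] .
qed

lemma lpn_one: assumes "1 \<le> p" shows "lpn p a (Suc 0) = \<bar>a 0\<bar>"
proof (cases "p = \<infinity>")
  case True
  have "{..<Suc 0} = {0}" by auto
  then show ?thesis unfolding lpn_def True by simp
next
  case False
  define q where "q = real_of_ereal p"
  have q: "1 \<le> q" unfolding q_def using assms False by (rule p_finite_ge1)
  show ?thesis unfolding lpn_fin[OF False] q_def[symmetric] using q by (simp add: powr_powr)
qed

lemma lpn_zero: assumes "1 \<le> p" "\<And>i. i < n \<Longrightarrow> a i = 0" shows "lpn p a n = 0"
proof -
  have "lpn p a n = lpn p (\<lambda>i. 0 * a i) n" using assms by (intro lpn_cong) auto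
  also have "\<dots> = 0" using lpn_scale[OF assms(1), of 0 a n] by simp
  finally show ?thesis .
qed

lemma lpn_triangle:
  assumes p: "1 \<le> p"
  shows "lpn p (\<lambda>i. a i + b i) n \<le> lpn p a n + lpn p b n"
proof (cases "p = \<infinity>")
  case True
  show ?thesis unfolding True lpn_inf_le_iff
  proof (intro conjI allI impI)
    show "0 \<le> lpn \<infinity> a n + lpn \<infinity> b n" using lpn_inf_nonneg[of a n] lpn_inf_nonneg[of b n] by simp
    fix i assume "i < n"
    then show "\<bar>a i + b i\<bar> \<le> lpn \<infinity> a n + lpn \<infinity> b n"
      using lpn_inf_ge[of i n a] lpn_inf_ge[of i n b] abs_triangle_ineq[of "a i" "b i"] by linarith
  qed
next
  case False
  define q where "q = real_of_ereal p"
  have q: "1 \<le> q" unfolding q_def using p False by (rule p_finite_ge1)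
  have "lpn p (\<lambda>i. a i + b i) n \<le> lpn p (\<lambda>i. \<bar>a i\<bar> + \<bar>b i\<bar>) n"
    using p by (intro lpn_mono) auto
  also have "\<dots> \<le> lpn p a n + lpn p b n"
    unfolding lpn_fin[OF False] q_def[symmetric]
    using minkowski_fin[OF q, of n "\<lambda>i. \<bar>a i\<bar>" "\<lambda>i. \<bar>b i\<bar>"] by simp
  finally show ?thesis .
qed

abbreviation Ball1 :: "(complex \<Rightarrow> complex) set" where
  "Ball1 \<equiv> {g :: complex \<Rightarrow> complex. g \<in> BlochHat \<and> bloch_seminorm g \<le> 1}"

definition Wsup :: "ereal \<Rightarrow> (nat \<Rightarrow> complex) \<Rightarrow> (nat \<Rightarrow> complex) \<Rightarrow> nat \<Rightarrow> real" where
  "Wsup p lam zs n = (SUP g\<in>Ball1. lpn p (\<lambda>i. cmod (lam i) * cmod (cderiv g (zs i))) n)"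

lemma psum_cond_iff:
  "psum_cond p f c \<longleftrightarrow> (\<forall>n lam zs. (\<forall>i<n. zs i \<in> disc) \<longrightarrow>
      lpn p (\<lambda>i. cmod (lam i) * norm (cderiv f (zs i))) n \<le> c * Wsup p lam zs n)"
  unfolding psum_cond_def Wsup_def ..

lemma disc_pos: "z \<in> disc \<Longrightarrow> 0 < 1 - (cmod z)\<^sup>2"
  by (simp add: abs_square_less_1)

lemma bloch_upper:
  assumes "g \<in> BlochHat" "z \<in> disc"
  shows "(1 - (cmod z)\<^sup>2) * norm (cderiv g z) \<le> bloch_seminorm g"
  unfolding bloch_seminorm_def
  by (rule cSUP_upper) (use assms in \<open>auto simp: BlochHat_def\<close>)

lemma blochI:
  assumes "vholo g" "g 0 = 0" "\<And>z. z \<in> disc \<Longrightarrow> (1 - (cmod z)\<^sup>2) * norm (cderiv g z) \<le> M"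
  shows "g \<in> BlochHat" "bloch_seminorm g \<le> M"
proof -
  show "g \<in> BlochHat" unfolding BlochHat_def using assms
    by (auto intro!: bdd_aboveI2[where M=M])
  show "bloch_seminorm g \<le> M" unfolding bloch_seminorm_def
    by (rule cSUP_least) (use assms in auto)
qed

lemma vholo_const0: "vholo (\<lambda>z. 0)"
  unfolding vholo_def using has_cderiv_const by blast

lemma cderiv_const: "cderiv (\<lambda>z. c) z = 0"
  using cderiv_eq[OF has_cderiv_const] .

lemma zero_Ball1: "(\<lambda>z. 0) \<in> Ball1"
proof -
  have "(\<lambda>z. 0::complex) \<in> BlochHat" "bloch_seminorm (\<lambda>z. 0::complex) \<le> 0"
    using blochI[OF vholo_const0, of 0] by (simp_all add: cderiv_const)
  then show ?thesis by simp
qed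

lemma Ball1_deriv:
  assumes "g \<in> Ball1" "z \<in> disc"
  shows "cmod (cderiv g z) \<le> 1 / (1 - (cmod z)\<^sup>2)"
proof -
  have "(1 - (cmod z)\<^sup>2) * norm (cderiv g z) \<le> 1"
    using bloch_upper[of g z] assms by auto
  then show ?thesis using disc_pos[OF assms(2)] by (simp add: field_simps)
qed

lemma W_bdd:
  assumes p: "1 \<le> p" and zs: "\<forall>i<n. zs i \<in> disc"
  shows "bdd_above ((\<lambda>g. lpn p (\<lambda>i. cmod (lam i) * cmod (cderiv g (zs i))) n) ` Ball1)"
proof (rule bdd_aboveI2)
  fix g assume g: "g \<in> Ball1"
  show "lpn p (\<lambda>i. cmod (lam i) * cmod (cderiv g (zs i))) n
        \<le> lpn p (\<lambda>i. cmod (lam i) * (1 / (1 - (cmod (zs i))\<^sup>2))) n"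
  proof (rule lpn_mono[OF p])
    fix i assume "i < n"
    then have "cmod (cderiv g (zs i)) \<le> 1 / (1 - (cmod (zs i))\<^sup>2)" using Ball1_deriv g zs by blast
    then have "cmod (lam i) * cmod (cderiv g (zs i)) \<le> cmod (lam i) * (1 / (1 - (cmod (zs i))\<^sup>2))"
      by (rule mult_left_mono) simp
    moreover have "0 < 1 - (cmod (zs i))\<^sup>2" using disc_pos zs \<open>i < n\<close> by blast
    ultimately show "\<bar>cmod (lam i) * cmod (cderiv g (zs i))\<bar> \<le> \<bar>cmod (lam i) * (1 / (1 - (cmod (zs i))\<^sup>2))\<bar>"
      by (simp add: mult_left_mono)
  qed
qed

lemma W_upper:
  assumes p: "1 \<le> p" and zs: "\<forall>i<n. zs i \<in> disc" and g: "g \<in> Ball1"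
  shows "lpn p (\<lambda>i. cmod (lam i) * cmod (cderiv g (zs i))) n \<le> Wsup p lam zs n"
  unfolding Wsup_def by (rule cSUP_upper[OF g W_bdd[OF p zs]])

lemma W_nonneg:
  assumes p: "1 \<le> p" and zs: "\<forall>i<n. zs i \<in> disc"
  shows "0 \<le> Wsup p lam zs n"
  using W_upper[OF p zs zero_Ball1, of lam] lpn_nonneg[of p _ n] by (meson order_trans)

lemma W_least:
  assumes "\<And>g. g \<in> Ball1 \<Longrightarrow> lpn p (\<lambda>i. cmod (lam i) * cmod (cderiv g (zs i))) n \<le> M"
  shows "Wsup p lam zs n \<le> M"
  unfolding Wsup_def by (rule cSUP_least) (use assms zero_Ball1 in auto)

lemma W_one:
  assumes p: "1 \<le> p" and z: "z \<in> disc"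
  shows "Wsup p (\<lambda>i. 1) (\<lambda>i. z) (Suc 0) \<le> 1 / (1 - (cmod z)\<^sup>2)"
proof (rule W_least)
  fix g assume g: "g \<in> Ball1"
  show "lpn p (\<lambda>i. cmod 1 * cmod (cderiv g z)) (Suc 0) \<le> 1 / (1 - (cmod z)\<^sup>2)"
    unfolding lpn_one[OF p] using Ball1_deriv[OF g z] by simp
qed

lemma psum_one:
  assumes p: "1 \<le> p" and f: "psum_cond p f c" and c: "0 \<le> c" and z: "z \<in> disc"
  shows "(1 - (cmod z)\<^sup>2) * norm (cderiv f z) \<le> c"
proof -
  have "lpn p (\<lambda>i. cmod ((\<lambda>i. 1::complex) i) * norm (cderiv f ((\<lambda>i. z) i))) (Suc 0)
        \<le> c * Wsup p (\<lambda>i. 1) (\<lambda>i. z) (Suc 0)"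
    using f[unfolded psum_cond_iff, rule_format, of "Suc 0" "\<lambda>i. z" "\<lambda>i. 1"] z by simp
  then have "norm (cderiv f z) \<le> c * Wsup p (\<lambda>i. 1) (\<lambda>i. z) (Suc 0)"
    unfolding lpn_one[OF p] by simp
  also have "\<dots> \<le> c * (1 / (1 - (cmod z)\<^sup>2))"
    by (rule mult_left_mono[OF W_one[OF p z] c])
  finally show ?thesis using disc_pos[OF z] by (simp add: field_simps)
qed

lemma psum_cond_mono:
  assumes p: "1 \<le> p" and f: "psum_cond p f c" and cc: "c \<le> c'"
  shows "psum_cond p f c'"
  unfolding psum_cond_iff
proof (intro allI impI)
  fix n :: nat and lam zs :: "nat \<Rightarrow> complex" assume zs: "\<forall>i<n. zs i \<in> disc"
  have "lpn p (\<lambda>i. cmod (lam i) * norm (cderiv f (zs i))) n \<le> c * Wsup p lam zs n"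
    using f zs unfolding psum_cond_iff by blast
  also have "\<dots> \<le> c' * Wsup p lam zs n"
    by (rule mult_right_mono[OF cc W_nonneg[OF p zs]])
  finally show "lpn p (\<lambda>i. cmod (lam i) * norm (cderiv f (zs i))) n \<le> c' * Wsup p lam zs n" .
qed

lemma psum_cond_transfer:
  assumes p: "1 \<le> p" and f: "psum_cond p f c" and k: "0 \<le> k"
    and le: "\<And>z. z \<in> disc \<Longrightarrow> norm (cderiv g z) \<le> k * norm (cderiv f z)"
  shows "psum_cond p g (k * c)"
  unfolding psum_cond_iff
proof (intro allI impI)
  fix n :: nat and lam zs :: "nat \<Rightarrow> complex" assume zs: "\<forall>i<n. zs i \<in> disc"
  have "lpn p (\<lambda>i. cmod (lam i) * norm (cderiv g (zs i))) n
        \<le> lpn p (\<lambda>i. k * (cmod (lam i) * norm (cderiv f (zs i)))) n"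
  proof (rule lpn_mono[OF p])
    fix i assume "i < n"
    then have "norm (cderiv g (zs i)) \<le> k * norm (cderiv f (zs i))" using le zs by blast
    then have "cmod (lam i) * norm (cderiv g (zs i)) \<le> cmod (lam i) * (k * norm (cderiv f (zs i)))"
      by (rule mult_left_mono) simp
    also have "\<dots> = k * (cmod (lam i) * norm (cderiv f (zs i)))" by (simp add: mult.left_commute)
    finally show "\<bar>cmod (lam i) * norm (cderiv g (zs i))\<bar> \<le> \<bar>k * (cmod (lam i) * norm (cderiv f (zs i)))\<bar>"
      using k by (simp add: abs_mult)
  qed
  also have "\<dots> = k * lpn p (\<lambda>i. cmod (lam i) * norm (cderiv f (zs i))) n"
    by (rule lpn_scale[OF p k])
  also have "\<dots> \<le> k * (c * Wsup p lam zs n)"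
    using f zs k unfolding psum_cond_iff by (blast intro: mult_left_mono)
  finally show "lpn p (\<lambda>i. cmod (lam i) * norm (cderiv g (zs i))) n \<le> k * c * Wsup p lam zs n"
    by (simp add: mult.assoc)
qed

lemma psum_cond_add:
  assumes p: "1 \<le> p" and f: "psum_cond p f c" and g: "psum_cond p g d"
    and le: "\<And>z. z \<in> disc \<Longrightarrow> norm (cderiv h z) \<le> norm (cderiv f z) + norm (cderiv g z)"
  shows "psum_cond p h (c + d)"
  unfolding psum_cond_iff
proof (intro allI impI)
  fix n :: nat and lam zs :: "nat \<Rightarrow> complex" assume zs: "\<forall>i<n. zs i \<in> disc"
  have "lpn p (\<lambda>i. cmod (lam i) * norm (cderiv h (zs i))) n
        \<le> lpn p (\<lambda>i. cmod (lam i) * norm (cderiv f (zs i)) + cmod (lam i) * norm (cderiv g (zs i))) n"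
  proof (rule lpn_mono[OF p])
    fix i assume "i < n"
    then have "norm (cderiv h (zs i)) \<le> norm (cderiv f (zs i)) + norm (cderiv g (zs i))" using le zs by blast
    then show "\<bar>cmod (lam i) * norm (cderiv h (zs i))\<bar>
        \<le> \<bar>cmod (lam i) * norm (cderiv f (zs i)) + cmod (lam i) * norm (cderiv g (zs i))\<bar>"
      by (simp add: mult_left_mono distrib_left[symmetric])
  qed
  also have "\<dots> \<le> lpn p (\<lambda>i. cmod (lam i) * norm (cderiv f (zs i))) n
                + lpn p (\<lambda>i. cmod (lam i) * norm (cderiv g (zs i))) n"
    by (rule lpn_triangle[OF p])
  also have "\<dots> \<le> c * Wsup p lam zs n + d * Wsup p lam zs n"
    using f g zs unfolding psum_cond_iff by (blast intro: add_mono)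
  finally show "lpn p (\<lambda>i. cmod (lam i) * norm (cderiv h (zs i))) n \<le> (c + d) * Wsup p lam zs n"
    by (simp add: distrib_right)
qed

lemma psum_cond_closed:
  assumes p: "1 \<le> p" and all: "\<And>c'. c < c' \<Longrightarrow> psum_cond p f c'"
  shows "psum_cond p f c"
  unfolding psum_cond_iff
proof (intro allI impI)
  fix n :: nat and lam zs :: "nat \<Rightarrow> complex" assume zs: "\<forall>i<n. zs i \<in> disc"
  define W where "W = Wsup p lam zs n"
  have W0: "0 \<le> W" unfolding W_def by (rule W_nonneg[OF p zs])
  show "lpn p (\<lambda>i. cmod (lam i) * norm (cderiv f (zs i))) n \<le> c * Wsup p lam zs n"
    unfolding W_def[symmetric]
  proof (rule field_le_epsilon)
    fix e :: real assume e: "0 < e"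
    have "c < c + e / (W + 1)" using e W0 by simp
    then have "lpn p (\<lambda>i. cmod (lam i) * norm (cderiv f (zs i))) n \<le> (c + e / (W + 1)) * W"
      using all zs unfolding psum_cond_iff W_def by blast
    also have "\<dots> = c * W + e * (W / (W + 1))" using W0 by (simp add: field_simps)
    also have "\<dots> \<le> c * W + e * 1" using W0 e by (intro add_left_mono mult_left_mono) auto
    finally show "lpn p (\<lambda>i. cmod (lam i) * norm (cderiv f (zs i))) n \<le> c * W + e" by simp
  qed
qed

lemma piB_props:
  assumes p: "1 \<le> p" and ex: "\<exists>c\<ge>0. psum_cond p f c"
  shows "psum_cond p f (piB p f)" "0 \<le> piB p f"
    and "\<And>c. 0 \<le> c \<Longrightarrow> psum_cond p f c \<Longrightarrow> piB p f \<le> c"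
proof -
  define C where "C = {c. c \<ge> 0 \<and> psum_cond p f c}"
  have ne: "C \<noteq> {}" using ex unfolding C_def by auto
  have bdd: "bdd_below C" unfolding C_def by (auto intro: bdd_belowI[where m=0])
  have piB: "piB p f = Inf C" unfolding piB_def C_def ..
  show "0 \<le> piB p f" unfolding piB by (rule cInf_greatest[OF ne]) (auto simp: C_def)
  show "piB p f \<le> c" if "0 \<le> c" "psum_cond p f c" for c
    unfolding piB by (rule cInf_lower) (use that bdd in \<open>auto simp: C_def\<close>)
  show "psum_cond p f (piB p f)"
  proof (rule psum_cond_closed[OF p])
    fix c' assume "piB p f < c'"
    then obtain c where "c \<in> C" "c < c'" unfolding piB using cInf_less_iff[OF ne bdd] by auto
    then show "psum_cond p f c'" unfolding C_def using psum_cond_mono[OF p, of f c c'] by auto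
  qed
qed

lemma PiB_iff: "f \<in> PiB p \<longleftrightarrow> vholo f \<and> f 0 = 0 \<and> (\<exists>c\<ge>0. psum_cond p f c)"
  unfolding PiB_def by simp

lemma vholoI: "(\<And>z. z \<in> disc \<Longrightarrow> has_cderiv f (d z) z) \<Longrightarrow> vholo f"
  unfolding vholo_def by blast

lemma vholo_from:
  assumes "\<And>z. z \<in> disc \<Longrightarrow> has_cderiv g (d z) z"
  shows "vholo g" "z \<in> disc \<Longrightarrow> cderiv g z = d z"
proof -
  show "vholo g" unfolding vholo_def using assms by blast
  show "z \<in> disc \<Longrightarrow> cderiv g z = d z" by (rule cderiv_eq) (rule assms)
qed

lemma vholo_add:
  assumes "vholo f" "vholo g"
  shows "vholo (\<lambda>w. f w + g w)"
    and "z \<in> disc \<Longrightarrow> cderiv (\<lambda>w. f w + g w) z = cderiv f z + cderiv g z"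
proof -
  have h: "\<And>z. z \<in> disc \<Longrightarrow> has_cderiv (\<lambda>w. f w + g w) (cderiv f z + cderiv g z) z"
    using has_cderiv_add[OF vholo_has_cderiv[OF assms(1)] vholo_has_cderiv[OF assms(2)]] by blast
  show "vholo (\<lambda>w. f w + g w)" by (rule vholo_from(1)[OF h])
  show "z \<in> disc \<Longrightarrow> cderiv (\<lambda>w. f w + g w) z = cderiv f z + cderiv g z" by (rule vholo_from(2)[OF h])
qed

lemma vholo_diff:
  assumes "vholo f" "vholo g"
  shows "vholo (\<lambda>w. f w - g w)"
    and "z \<in> disc \<Longrightarrow> cderiv (\<lambda>w. f w - g w) z = cderiv f z - cderiv g z"
proof -
  have h: "\<And>z. z \<in> disc \<Longrightarrow> has_cderiv (\<lambda>w. f w - g w) (cderiv f z - cderiv g z) z"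
    using has_cderiv_diff[OF vholo_has_cderiv[OF assms(1)] vholo_has_cderiv[OF assms(2)]] by blast
  show "vholo (\<lambda>w. f w - g w)" by (rule vholo_from(1)[OF h])
  show "z \<in> disc \<Longrightarrow> cderiv (\<lambda>w. f w - g w) z = cderiv f z - cderiv g z" by (rule vholo_from(2)[OF h])
qed

lemma vholo_cscale:
  assumes "vholo f"
  shows "vholo (\<lambda>w. a *\<^sub>C f w)"
    and "z \<in> disc \<Longrightarrow> cderiv (\<lambda>w. a *\<^sub>C f w) z = a *\<^sub>C cderiv f z"
proof -
  have h: "\<And>z. z \<in> disc \<Longrightarrow> has_cderiv (\<lambda>w. a *\<^sub>C f w) (a *\<^sub>C cderiv f z) z"
    using has_cderiv_cscale[OF vholo_has_cderiv[OF assms(1)]] by blast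
  show "vholo (\<lambda>w. a *\<^sub>C f w)" by (rule vholo_from(1)[OF h])
  show "z \<in> disc \<Longrightarrow> cderiv (\<lambda>w. a *\<^sub>C f w) z = a *\<^sub>C cderiv f z" by (rule vholo_from(2)[OF h])
qed

lemma vholo_linear:
  assumes "vholo f" "cbounded_linear T"
  shows "vholo (\<lambda>w. T (f w))"
    and "z \<in> disc \<Longrightarrow> cderiv (\<lambda>w. T (f w)) z = T (cderiv f z)"
proof -
  have h: "\<And>z. z \<in> disc \<Longrightarrow> has_cderiv (\<lambda>w. T (f w)) (T (cderiv f z)) z"
    using has_cderiv_linear[OF vholo_has_cderiv[OF assms(1)] assms(2)] by blast
  show "vholo (\<lambda>w. T (f w))" by (rule vholo_from(1)[OF h])
  show "z \<in> disc \<Longrightarrow> cderiv (\<lambda>w. T (f w)) z = T (cderiv f z)" by (rule vholo_from(2)[OF h])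
qed

lemma vholo_scal:
  assumes "vholo (g :: complex \<Rightarrow> complex)"
  shows "vholo (\<lambda>w. g w *\<^sub>C x)"
    and "z \<in> disc \<Longrightarrow> cderiv (\<lambda>w. g w *\<^sub>C x) z = cderiv g z *\<^sub>C x"
proof -
  have h: "\<And>z. z \<in> disc \<Longrightarrow> has_cderiv (\<lambda>w. g w *\<^sub>C x) (cderiv g z *\<^sub>C x) z"
    using has_cderiv_scal[OF vholo_has_cderiv[OF assms(1)]] by blast
  show "vholo (\<lambda>w. g w *\<^sub>C x)" by (rule vholo_from(1)[OF h])
  show "z \<in> disc \<Longrightarrow> cderiv (\<lambda>w. g w *\<^sub>C x) z = cderiv g z *\<^sub>C x" by (rule vholo_from(2)[OF h])
qed

lemma vholo_transform:
  assumes "vholo f" "\<And>w. w \<in> disc \<Longrightarrow> f w = g w"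
  shows "vholo g" and "z \<in> disc \<Longrightarrow> cderiv g z = cderiv f z"
proof -
  have h: "\<And>z. z \<in> disc \<Longrightarrow> has_cderiv g (cderiv f z) z"
    using has_cderiv_transform[OF vholo_has_cderiv[OF assms(1)] _ assms(2)] by blast
  show "vholo g" by (rule vholo_from(1)[OF h])
  show "z \<in> disc \<Longrightarrow> cderiv g z = cderiv f z" by (rule vholo_from(2)[OF h])
qed

lemma piB_le: "1 \<le> p \<Longrightarrow> 0 \<le> c \<Longrightarrow> psum_cond p f c \<Longrightarrow> piB p f \<le> c"
  using piB_props(3) by blast

lemma PiB_psum: "1 \<le> p \<Longrightarrow> f \<in> PiB p \<Longrightarrow> psum_cond p f (piB p f)"
  using piB_props(1) PiB_iff by blast

lemma PiB_nonneg: "1 \<le> p \<Longrightarrow> f \<in> PiB p \<Longrightarrow> 0 \<le> piB p f"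
  using piB_props(2) PiB_iff by blast

lemma PiB_deriv_bound:
  assumes "1 \<le> p" "f \<in> PiB p" "z \<in> disc"
  shows "(1 - (cmod z)\<^sup>2) * norm (cderiv f z) \<le> piB p f"
  using psum_one[OF assms(1) PiB_psum[OF assms(1,2)] PiB_nonneg[OF assms(1,2)] assms(3)] .

lemma PiB_Bloch:
  assumes "1 \<le> p" "f \<in> PiB p"
  shows "f \<in> BlochHat" "bloch_seminorm f \<le> piB p f"
  using blochI[of f "piB p f"] PiB_deriv_bound[OF assms] assms(2) unfolding PiB_iff by auto

lemma PiB_zero:
  assumes "1 \<le> p"
  shows "(\<lambda>z. 0::'a::complex_banach) \<in> PiB p" "psum_cond p (\<lambda>z. 0::'a) 0" "piB p (\<lambda>z. 0::'a) = 0"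
proof -
  show ps: "psum_cond p (\<lambda>z. 0::'a) 0"
    unfolding psum_cond_iff using lpn_zero[OF assms] by (simp add: cderiv_const)
  then show z: "(\<lambda>z. 0::'a) \<in> PiB p" unfolding PiB_iff using vholo_const0 by auto
  then show "piB p (\<lambda>z. 0::'a) = 0" using piB_le[OF assms order_refl ps] PiB_nonneg[OF assms z] by linarith
qed

lemma PiB_add:
  assumes p: "1 \<le> p" and f: "f \<in> PiB p" and g: "g \<in> PiB p"
  shows "(\<lambda>z. f z + g z) \<in> PiB p" "piB p (\<lambda>z. f z + g z) \<le> piB p f + piB p g"
proof -
  have hf: "vholo f" "f 0 = 0" and hg: "vholo g" "g 0 = 0" using f g unfolding PiB_iff by auto
  have ps: "psum_cond p (\<lambda>z. f z + g z) (piB p f + piB p g)"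
    by (rule psum_cond_add[OF p PiB_psum[OF p f] PiB_psum[OF p g]])
       (simp add: vholo_add(2)[OF hf(1) hg(1)] norm_triangle_ineq)
  have c0: "0 \<le> piB p f + piB p g" using PiB_nonneg[OF p f] PiB_nonneg[OF p g] by simp
  show "(\<lambda>z. f z + g z) \<in> PiB p" unfolding PiB_iff using ps c0 vholo_add(1)[OF hf(1) hg(1)] hf hg by auto
  show "piB p (\<lambda>z. f z + g z) \<le> piB p f + piB p g" by (rule piB_le[OF p c0 ps])
qed

lemma PiB_scale:
  assumes p: "1 \<le> p" and f: "f \<in> PiB p"
  shows "(\<lambda>z. a *\<^sub>C f z) \<in> PiB p" "piB p (\<lambda>z. a *\<^sub>C f z) = cmod a * piB p f"
proof -
  have hf: "vholo f" "f 0 = 0" using f unfolding PiB_iff by auto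
  have ps: "psum_cond p (\<lambda>z. a *\<^sub>C f z) (cmod a * piB p f)"
    by (rule psum_cond_transfer[OF p PiB_psum[OF p f]]) (auto simp: vholo_cscale(2)[OF hf(1)] norm_cscale)
  have c0: "0 \<le> cmod a * piB p f" using PiB_nonneg[OF p f] by simp
  show af: "(\<lambda>z. a *\<^sub>C f z) \<in> PiB p" unfolding PiB_iff using ps c0 vholo_cscale(1)[OF hf(1)] hf by auto
  have le: "piB p (\<lambda>z. a *\<^sub>C f z) \<le> cmod a * piB p f" by (rule piB_le[OF p c0 ps])
  show "piB p (\<lambda>z. a *\<^sub>C f z) = cmod a * piB p f"
  proof (cases "a = 0")
    case True
    then show ?thesis using PiB_zero[OF p] by simp
  next
    case False
    have haf: "vholo (\<lambda>z. a *\<^sub>C f z)" using vholo_cscale(1)[OF hf(1)] .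
    have ps2: "psum_cond p f (inverse (cmod a) * piB p (\<lambda>z. a *\<^sub>C f z))"
    proof (rule psum_cond_transfer[OF p PiB_psum[OF p af]])
      fix z :: complex assume z: "z \<in> disc"
      have "cderiv f z = inverse a *\<^sub>C cderiv (\<lambda>z. a *\<^sub>C f z) z"
        using False by (simp add: vholo_cscale(2)[OF hf(1) z] cscale_cscale)
      then show "norm (cderiv f z) \<le> inverse (cmod a) * norm (cderiv (\<lambda>z. a *\<^sub>C f z) z)"
        by (simp add: norm_cscale norm_inverse)
    qed simp
    have "piB p f \<le> inverse (cmod a) * piB p (\<lambda>z. a *\<^sub>C f z)"
      by (rule piB_le[OF p _ ps2]) (use PiB_nonneg[OF p af] in simp)
    then have "cmod a * piB p f \<le> piB p (\<lambda>z. a *\<^sub>C f z)" using False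
      by (simp add: field_simps)
    then show ?thesis using le by simp
  qed
qed

lemma PiB_zero_iff:
  assumes p: "1 \<le> p" and f: "f \<in> PiB p"
  shows "piB p f = 0 \<longleftrightarrow> (\<forall>z\<in>disc. f z = 0)"
proof
  have hf: "vholo f" "f 0 = 0" using f unfolding PiB_iff by auto
  assume "piB p f = 0"
  then have d0: "cderiv f z = 0" if "z \<in> disc" for z
  proof -
    have "(1 - (cmod z)\<^sup>2) * norm (cderiv f z) \<le> (1 - (cmod z)\<^sup>2) * 0"
      using PiB_deriv_bound[OF p f that] \<open>piB p f = 0\<close> by simp
    then have "norm (cderiv f z) \<le> 0" using mult_le_cancel_left_pos[OF disc_pos[OF that]] by blast
    then show ?thesis by simp
  qed
  have "\<exists>c. \<forall>x\<in>disc. f x = c"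
  proof (rule has_derivative_zero_constant)
    fix x assume x: "x \<in> disc"
    have "(f has_derivative (\<lambda>h. h *\<^sub>C 0)) (at x)"
      using vholo_has_cderiv[OF hf(1) x] d0[OF x] unfolding has_cderiv_def by simp
    then show "(f has_derivative (\<lambda>h. 0)) (at x within disc)"
      by (simp add: has_derivative_at_withinI)
  qed simp
  then obtain c where "\<forall>x\<in>disc. f x = c" by blast
  then show "\<forall>z\<in>disc. f z = 0" using hf(2) by (metis centre_in_ball zero_less_one)
next
  assume z: "\<forall>z\<in>disc. f z = 0"
  have "psum_cond p f (0 * 0)"
  proof (rule psum_cond_transfer[OF p PiB_zero(2)[OF p]])
    fix w :: complex assume "w \<in> disc"
    then have "cderiv f w = cderiv (\<lambda>z. 0) w"
      using vholo_transform(2)[OF vholo_const0, of f] z by simp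
    then show "norm (cderiv f w) \<le> 0 * norm (cderiv (\<lambda>z. 0::'a) w)" by (simp add: cderiv_const)
  qed simp
  then show "piB p f = 0" using piB_le[OF p, of 0 f] PiB_nonneg[OF p f] by simp
qed

lemma PiB_scal:
  assumes p: "1 \<le> p" and g: "g \<in> BlochHat"
  shows "(\<lambda>z. g z *\<^sub>C x) \<in> PiB p" "piB p (\<lambda>z. g z *\<^sub>C x) = bloch_seminorm g * norm x"
proof -
  have hg: "vholo g" "g 0 = 0" using g unfolding BlochHat_def by auto
  have hgx: "vholo (\<lambda>z. g z *\<^sub>C x)" by (rule vholo_scal(1)[OF hg(1)])
  have dgx: "cderiv (\<lambda>z. g z *\<^sub>C x) z = cderiv g z *\<^sub>C x" if "z \<in> disc" for z
    by (rule vholo_scal(2)[OF hg(1) that])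
  have bs0: "0 \<le> bloch_seminorm g"
    using bloch_upper[OF g, of 0] by (simp add: order_trans[OF norm_ge_zero])
  define s where "s = bloch_seminorm g"
  have ps: "psum_cond p (\<lambda>z. g z *\<^sub>C x) (s * norm x)"
  proof (cases "s = 0")
    case True
    have "psum_cond p (\<lambda>z. g z *\<^sub>C x) (0 * 0)"
    proof (rule psum_cond_transfer[OF p PiB_zero(2)[OF p]])
      fix w :: complex assume w: "w \<in> disc"
      have "(1 - (cmod w)\<^sup>2) * norm (cderiv g w) \<le> 0" using bloch_upper[OF g w] True s_def by simp
      then have "cderiv g w = 0" using disc_pos[OF w] by (simp add: mult_le_0_iff)
      then show "norm (cderiv (\<lambda>z. g z *\<^sub>C x) w) \<le> 0 * norm (cderiv (\<lambda>z. 0::'a) w)"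
        using dgx[OF w] by simp
    qed simp
    then show ?thesis using True by simp
  next
    case False
    then have sp: "s > 0" using bs0 s_def by simp
    define g1 where "g1 = (\<lambda>z. complex_of_real (inverse s) * g z)"
    have hg1v: "vholo g1"
      using vholo_cscale(1)[OF hg(1), of "complex_of_real (inverse s)"] unfolding g1_def by simp
    have hg1: "cderiv g1 z = complex_of_real (inverse s) * cderiv g z" if "z \<in> disc" for z
      using vholo_cscale(2)[OF hg(1) that, of "complex_of_real (inverse s)"] unfolding g1_def by simp
    have g1B: "g1 \<in> Ball1"
    proof -
      have bd: "(1 - (cmod z)\<^sup>2) * norm (cderiv g1 z) \<le> 1" if z: "z \<in> disc" for z
      proof -
        have "(1 - (cmod z)\<^sup>2) * norm (cderiv g1 z) = ((1 - (cmod z)\<^sup>2) * norm (cderiv g z)) / s"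
        proof -
          have "norm (cderiv g1 z) = norm (cderiv g z) / s"
            using hg1[OF z] sp by (simp add: norm_mult norm_inverse divide_inverse mult.commute)
          then show ?thesis by simp
        qed
        also have "\<dots> \<le> s / s" using bloch_upper[OF g z] sp s_def by (intro divide_right_mono) auto
        finally show ?thesis using sp by simp
      qed
      have g10: "g1 0 = 0" using hg by (simp add: g1_def)
      have "g1 \<in> BlochHat \<and> bloch_seminorm g1 \<le> 1"
        using blochI[OF hg1v g10 bd] by simp
      then show ?thesis by simp
    qed
    show ?thesis unfolding psum_cond_iff
    proof (intro allI impI)
      fix n :: nat and lam zs :: "nat \<Rightarrow> complex" assume zs: "\<forall>i<n. zs i \<in> disc"
      have "lpn p (\<lambda>i. cmod (lam i) * norm (cderiv (\<lambda>z. g z *\<^sub>C x) (zs i))) n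
          = lpn p (\<lambda>i. (s * norm x) * (cmod (lam i) * cmod (cderiv g1 (zs i)))) n"
      proof (rule lpn_cong[OF p])
        fix i assume "i < n"
        then have zi: "zs i \<in> disc" using zs by blast
        show "\<bar>cmod (lam i) * norm (cderiv (\<lambda>z. g z *\<^sub>C x) (zs i))\<bar>
            = \<bar>(s * norm x) * (cmod (lam i) * cmod (cderiv g1 (zs i)))\<bar>"
          using sp by (simp add: dgx[OF zi] hg1[OF zi] norm_cscale norm_mult norm_inverse)
      qed
      also have "\<dots> = (s * norm x) * lpn p (\<lambda>i. cmod (lam i) * cmod (cderiv g1 (zs i))) n"
        by (rule lpn_scale[OF p]) (use sp in simp)
      also have "\<dots> \<le> (s * norm x) * Wsup p lam zs n"
        by (rule mult_left_mono[OF W_upper[OF p zs g1B]]) (use sp in simp)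
      finally show "lpn p (\<lambda>i. cmod (lam i) * norm (cderiv (\<lambda>z. g z *\<^sub>C x) (zs i))) n
          \<le> s * norm x * Wsup p lam zs n" .
    qed
  qed
  have c0: "0 \<le> s * norm x" using bs0 s_def by simp
  show gx: "(\<lambda>z. g z *\<^sub>C x) \<in> PiB p" unfolding PiB_iff using hgx hg ps c0 by auto
  have le: "piB p (\<lambda>z. g z *\<^sub>C x) \<le> s * norm x" by (rule piB_le[OF p c0 ps])
  have ge: "s * norm x \<le> piB p (\<lambda>z. g z *\<^sub>C x)"
  proof -
    have "(1 - (cmod z)\<^sup>2) * norm (cderiv g z) * norm x \<le> piB p (\<lambda>z. g z *\<^sub>C x)" if z: "z \<in> disc" for z
      using PiB_deriv_bound[OF p gx z] dgx[OF z] by (simp add: norm_cscale mult.assoc)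
    then have "\<forall>z\<in>disc. (1 - (cmod z)\<^sup>2) * norm (cderiv g z) \<le> piB p (\<lambda>z. g z *\<^sub>C x) / norm x \<or> x = 0"
      by (auto simp: pos_le_divide_eq)
    show ?thesis
    proof (cases "x = 0")
      case True then show ?thesis using PiB_nonneg[OF p gx] by simp
    next
      case False
      have "s \<le> piB p (\<lambda>z. g z *\<^sub>C x) / norm x"
        unfolding s_def bloch_seminorm_def
      proof (rule cSUP_least)
        fix z :: complex assume "z \<in> disc"
        then show "(1 - (cmod z)\<^sup>2) * norm (cderiv g z) \<le> piB p (\<lambda>z. g z *\<^sub>C x) / norm x"
          using \<open>\<forall>z\<in>disc. _\<close> False by auto
      qed simp
      then show ?thesis using False by (simp add: pos_le_divide_eq)
    qed
  qed
  show "piB p (\<lambda>z. g z *\<^sub>C x) = bloch_seminorm g * norm x" using le ge s_def by simp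
qed

section \<open>Schwarz-Pick\<close>

lemma moebius_has_deriv:
  fixes b w :: complex
  assumes "1 - cnj b * w \<noteq> 0"
  shows "((\<lambda>w. (w - b) / (1 - cnj b * w)) has_field_derivative (1 - cnj b * b) / ((1 - cnj b * w) * (1 - cnj b * w))) (at w)"
proof -
  have d1: "((\<lambda>w. w - b) has_field_derivative 1) (at w)" by (auto intro!: derivative_eq_intros)
  have d2: "((\<lambda>w. 1 - cnj b * w) has_field_derivative - cnj b) (at w)" by (auto intro!: derivative_eq_intros)
  have "((\<lambda>w. (w - b) / (1 - cnj b * w)) has_field_derivative
          (1 * (1 - cnj b * w) - (w - b) * (- cnj b)) / ((1 - cnj b * w) * (1 - cnj b * w))) (at w)"
    using DERIV_divide[OF d1 d2] assms by simp
  note D0 = this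
  have E: "1 * (1 - cnj b * w) - (w - b) * (- cnj b) = 1 - cnj b * b"
    by (simp add: algebra_simps)
  show ?thesis using D0 unfolding E .
qed

lemma cnj_mult_self: "cnj b * b = complex_of_real ((cmod b)\<^sup>2)"
  using complex_norm_square[of b] by (simp add: mult.commute)

lemma disc_denom: "cmod b < 1 \<Longrightarrow> cmod w < 1 \<Longrightarrow> 1 - cnj b * w \<noteq> 0"
proof
  assume "cmod b < 1" "cmod w < 1" "1 - cnj b * w = 0"
  then have "cmod (cnj b * w) = 1" by (metis norm_one right_minus_eq)
  moreover have "cmod (cnj b * w) < 1" using \<open>cmod b < 1\<close> \<open>cmod w < 1\<close>
    by (simp add: norm_mult) (metis abs_norm_cancel mult_le_one norm_ge_zero less_le_not_le linorder_not_le mult_strict_mono' mult_1_left)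
  ultimately show False by simp
qed

lemma schwarz_pick:
  assumes holh: "h holomorphic_on disc" and hD: "h ` disc \<subseteq> disc" and z: "z \<in> disc"
  shows "(1 - (cmod z)\<^sup>2) * cmod (deriv h z) \<le> 1 - (cmod (h z))\<^sup>2"
proof -
  define a where "a = z"
  define b where "b = h z"
  have a1: "cmod a < 1" using z a_def by simp
  have "h z \<in> disc" using hD z by blast
  then have b1: "cmod b < 1" using b_def by simp
  define \<phi> where "\<phi> = Moebius_function 0 b"
  define \<psi> where "\<psi> = Moebius_function 0 (-a)"
  have \<phi>_eq: "\<phi> w = (w - b) / (1 - cnj b * w)" for w
    unfolding \<phi>_def Moebius_function_def by simp
  have \<psi>_eq: "\<psi> w = (w - (-a)) / (1 - cnj (-a) * w)" for w
    unfolding \<psi>_def Moebius_function_def by simp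
  have hol\<phi>: "\<phi> holomorphic_on disc" unfolding \<phi>_def using Moebius_function_holomorphic b1 by simp
  have hol\<psi>: "\<psi> holomorphic_on disc" unfolding \<psi>_def using Moebius_function_holomorphic a1 by simp
  have \<phi>D: "\<phi> ` disc \<subseteq> disc" unfolding \<phi>_def using Moebius_function_norm_lt_1 b1 by auto
  have \<psi>D: "\<psi> ` disc \<subseteq> disc" unfolding \<psi>_def using Moebius_function_norm_lt_1 a1 by auto
  define G where "G = \<phi> \<circ> h \<circ> \<psi>"
  have holG: "G holomorphic_on disc" unfolding G_def
    by (rule holomorphic_on_compose_gen[OF hol\<psi> holomorphic_on_compose_gen[OF holh hol\<phi> hD] \<psi>D])
  have \<psi>0: "\<psi> 0 = a" unfolding \<psi>_eq by simp
  have G0: "G 0 = 0" unfolding G_def using \<psi>0 by (simp add: \<phi>_eq b_def a_def)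
  have GD: "cmod (G w) < 1" if "cmod w < 1" for w
  proof -
    have "w \<in> disc" using that by simp
    then have "\<psi> w \<in> disc" using \<psi>D by blast
    then have "h (\<psi> w) \<in> disc" using hD by blast
    then have "\<phi> (h (\<psi> w)) \<in> disc" using \<phi>D by blast
    then show ?thesis unfolding G_def by simp
  qed
  have Schw: "cmod (deriv G 0) \<le> 1"
    using Schwarz_Lemma(2)[OF holG G0 GD, of 0] by simp
  have d\<psi>: "(\<psi> has_field_derivative (1 - cnj (-a) * (-a)) / ((1 - cnj (-a) * 0) * (1 - cnj (-a) * 0))) (at 0)"
    unfolding \<psi>_eq[abs_def] by (rule moebius_has_deriv) simp
  have dh: "(h has_field_derivative deriv h a) (at (\<psi> 0))"
    unfolding \<psi>0 by (rule holomorphic_derivI[OF holh]) (use a1 in auto)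
  have nb: "1 - cnj b * b \<noteq> 0" by (rule disc_denom[OF b1 b1])
  have d\<phi>: "(\<phi> has_field_derivative (1 - cnj b * b) / ((1 - cnj b * b) * (1 - cnj b * b))) (at (h (\<psi> 0)))"
  proof -
    have hab: "h a = b" by (simp add: a_def b_def)
    show ?thesis unfolding \<psi>0 \<phi>_eq[abs_def] hab by (rule moebius_has_deriv[OF nb])
  qed
  have "(G has_field_derivative
         ((1 - cnj b * b) / ((1 - cnj b * b) * (1 - cnj b * b))) * (deriv h a * ((1 - cnj (-a) * (-a)) / ((1 - cnj (-a) * 0) * (1 - cnj (-a) * 0))))) (at 0)"
  proof -
    have dh\<psi>: "((h \<circ> \<psi>) has_field_derivative deriv h a * ((1 - cnj (-a) * (-a)) / ((1 - cnj (-a) * 0) * (1 - cnj (-a) * 0)))) (at 0)"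
      by (rule DERIV_chain[OF dh d\<psi>])
    have d\<phi>': "(\<phi> has_field_derivative (1 - cnj b * b) / ((1 - cnj b * b) * (1 - cnj b * b))) (at ((h \<circ> \<psi>) 0))"
      using d\<phi> by simp
    show ?thesis unfolding G_def comp_assoc by (rule DERIV_chain[OF d\<phi>' dh\<psi>])
  qed
  then have dG: "deriv G 0 = ((1 - cnj b * b) / ((1 - cnj b * b) * (1 - cnj b * b))) * (deriv h a * ((1 - cnj (-a) * (-a)) / ((1 - cnj (-a) * 0) * (1 - cnj (-a) * 0))))"
    by (rule DERIV_imp_deriv)
  have uu: "(1 - cnj b * b) / ((1 - cnj b * b) * (1 - cnj b * b)) = 1 / (1 - cnj b * b)"
    using nb by simp
  have "deriv G 0 = deriv h a * (1 - cnj a * a) / (1 - cnj b * b)"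
    unfolding dG uu by simp
  then have "deriv G 0 = deriv h a * complex_of_real (1 - (cmod a)\<^sup>2) / complex_of_real (1 - (cmod b)\<^sup>2)"
    by (simp add: cnj_mult_self)
  then have "cmod (deriv G 0) = cmod (deriv h a) * \<bar>1 - (cmod a)\<^sup>2\<bar> / \<bar>1 - (cmod b)\<^sup>2\<bar>"
    by (simp only: norm_mult norm_divide norm_of_real)
  moreover have pa: "0 < 1 - (cmod a)\<^sup>2" using disc_pos[of a] a1 by simp
  moreover have pb: "0 < 1 - (cmod b)\<^sup>2" using disc_pos[of b] b1 by simp
  ultimately have "cmod (deriv G 0) = cmod (deriv h a) * (1 - (cmod a)\<^sup>2) / (1 - (cmod b)\<^sup>2)"
    by simp
  with Schw have "cmod (deriv h a) * (1 - (cmod a)\<^sup>2) / (1 - (cmod b)\<^sup>2) \<le> 1" by simp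
  then have "cmod (deriv h a) * (1 - (cmod a)\<^sup>2) \<le> 1 - (cmod b)\<^sup>2"
    using pb by (simp add: divide_le_eq)
  then show ?thesis unfolding a_def b_def by (simp add: mult.commute)
qed

lemma comp_Ball1:
  assumes g: "g \<in> Ball1" and holh: "h holomorphic_on disc" and hD: "h ` disc \<subseteq> disc" and h0: "h 0 = 0"
  shows "(\<lambda>w. g (h w)) \<in> Ball1"
    and "\<And>z. z \<in> disc \<Longrightarrow> cderiv (\<lambda>w. g (h w)) z = deriv h z * cderiv g (h z)"
proof -
  have hg: "vholo g" "g 0 = 0" using g unfolding BlochHat_def by auto
  have hz: "h z \<in> disc" if "z \<in> disc" for z using hD that by blast
  have dh: "(h has_field_derivative deriv h z) (at z)" if "z \<in> disc" for z
    by (rule holomorphic_derivI[OF holh open_ball that])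
  have d: "has_cderiv (\<lambda>w. g (h w)) (deriv h z * cderiv g (h z)) z" if "z \<in> disc" for z
    using has_cderiv_comp[OF dh[OF that] vholo_has_cderiv[OF hg(1) hz[OF that]]] by simp
  show cd: "\<And>z. z \<in> disc \<Longrightarrow> cderiv (\<lambda>w. g (h w)) z = deriv h z * cderiv g (h z)"
    by (rule vholo_from(2)[OF d])
  have v: "vholo (\<lambda>w. g (h w))" by (rule vholo_from(1)[OF d])
  have bd: "(1 - (cmod z)\<^sup>2) * norm (cderiv (\<lambda>w. g (h w)) z) \<le> 1" if z: "z \<in> disc" for z
  proof -
    have "(1 - (cmod z)\<^sup>2) * norm (cderiv (\<lambda>w. g (h w)) z)
          = ((1 - (cmod z)\<^sup>2) * cmod (deriv h z)) * cmod (cderiv g (h z))"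
      using cd[OF z] by (simp add: norm_mult mult.assoc)
    also have "\<dots> \<le> (1 - (cmod (h z))\<^sup>2) * cmod (cderiv g (h z))"
      by (rule mult_right_mono[OF schwarz_pick[OF holh hD z]]) simp
    also have "\<dots> \<le> bloch_seminorm g" using bloch_upper[OF _ hz[OF z], of g] g by simp
    also have "\<dots> \<le> 1" using g by simp
    finally show ?thesis .
  qed
  have "(\<lambda>w. g (h w)) \<in> BlochHat \<and> bloch_seminorm (\<lambda>w. g (h w)) \<le> 1"
    using blochI[OF v _ bd] h0 hg(2) by simp
  then show "(\<lambda>w. g (h w)) \<in> Ball1" by simp
qed

lemma PiB_compose:
  assumes p: "1 \<le> p" and f: "f \<in> PiB p" and holh: "h holomorphic_on disc" and hD: "h ` disc \<subseteq> disc"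
    and h0: "h 0 = 0" and T: "cbounded_linear T"
  shows "T \<circ> f \<circ> h \<in> PiB p" "piB p (T \<circ> f \<circ> h) \<le> onorm T * piB p f"
proof -
  have hf: "vholo f" "f 0 = 0" using f unfolding PiB_iff by auto
  have blT: "bounded_linear T" and TC: "\<And>a x. T (a *\<^sub>C x) = a *\<^sub>C T x"
    using T unfolding cbounded_linear_def by auto
  have hz: "h z \<in> disc" if "z \<in> disc" for z using hD that by blast
  have dh: "(h has_field_derivative deriv h z) (at z)" if "z \<in> disc" for z
    by (rule holomorphic_derivI[OF holh open_ball that])
  have eq: "T \<circ> f \<circ> h = (\<lambda>w. T (f (h w)))" by (simp add: comp_def)
  have d: "has_cderiv (\<lambda>w. T (f (h w))) (deriv h z *\<^sub>C T (cderiv f (h z))) z" if "z \<in> disc" for z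
    using has_cderiv_linear[OF has_cderiv_comp[OF dh[OF that] vholo_has_cderiv[OF hf(1) hz[OF that]]] T]
    by (simp add: TC)
  have v: "vholo (\<lambda>w. T (f (h w)))" by (rule vholo_from(1)[OF d])
  have cd: "cderiv (\<lambda>w. T (f (h w))) z = deriv h z *\<^sub>C T (cderiv f (h z))" if "z \<in> disc" for z
    by (rule vholo_from(2)[OF d that])
  have T0: "T 0 = 0" using blT by (simp add: linear_simps)
  have oT: "0 \<le> onorm T" using onorm_pos_le[OF blT] .
  define c where "c = piB p f"
  have c0: "0 \<le> c" unfolding c_def by (rule PiB_nonneg[OF p f])
  have psf: "psum_cond p f c" unfolding c_def by (rule PiB_psum[OF p f])
  have ps: "psum_cond p (\<lambda>w. T (f (h w))) (onorm T * c)"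
    unfolding psum_cond_iff
  proof (intro allI impI)
    fix n :: nat and lam zs :: "nat \<Rightarrow> complex" assume zs: "\<forall>i<n. zs i \<in> disc"
    define lam' where "lam' = (\<lambda>i. lam i * deriv h (zs i))"
    define zs' where "zs' = (\<lambda>i. h (zs i))"
    have zs': "\<forall>i<n. zs' i \<in> disc" using zs hz unfolding zs'_def by blast
    have "lpn p (\<lambda>i. cmod (lam i) * norm (cderiv (\<lambda>w. T (f (h w))) (zs i))) n
        \<le> lpn p (\<lambda>i. onorm T * (cmod (lam' i) * norm (cderiv f (zs' i)))) n"
    proof (rule lpn_mono[OF p])
      fix i assume "i < n"
      then have zi: "zs i \<in> disc" using zs by blast
      have "norm (cderiv (\<lambda>w. T (f (h w))) (zs i)) = cmod (deriv h (zs i)) * norm (T (cderiv f (h (zs i))))"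
        using cd[OF zi] by (simp add: norm_cscale)
      also have "\<dots> \<le> cmod (deriv h (zs i)) * (onorm T * norm (cderiv f (h (zs i))))"
        by (rule mult_left_mono[OF onorm[OF blT]]) simp
      finally have "cmod (lam i) * norm (cderiv (\<lambda>w. T (f (h w))) (zs i))
          \<le> cmod (lam i) * (cmod (deriv h (zs i)) * (onorm T * norm (cderiv f (h (zs i)))))"
        by (rule mult_left_mono) simp
      also have "\<dots> = onorm T * (cmod (lam' i) * norm (cderiv f (zs' i)))"
        unfolding lam'_def zs'_def by (simp add: norm_mult mult_ac)
      finally show "\<bar>cmod (lam i) * norm (cderiv (\<lambda>w. T (f (h w))) (zs i))\<bar>
          \<le> \<bar>onorm T * (cmod (lam' i) * norm (cderiv f (zs' i)))\<bar>"
        using oT by simp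
    qed
    also have "\<dots> = onorm T * lpn p (\<lambda>i. cmod (lam' i) * norm (cderiv f (zs' i))) n"
      by (rule lpn_scale[OF p oT])
    also have "\<dots> \<le> onorm T * (c * Wsup p lam' zs' n)"
      using psf zs' unfolding psum_cond_iff by (blast intro: mult_left_mono oT)
    also have "Wsup p lam' zs' n \<le> Wsup p lam zs n"
    proof (rule W_least)
      fix g assume g: "g \<in> Ball1"
      have gh: "(\<lambda>w. g (h w)) \<in> Ball1" by (rule comp_Ball1(1)[OF g holh hD h0])
      have "lpn p (\<lambda>i. cmod (lam' i) * cmod (cderiv g (zs' i))) n
          = lpn p (\<lambda>i. cmod (lam i) * cmod (cderiv (\<lambda>w. g (h w)) (zs i))) n"
      proof (rule lpn_cong[OF p])
        fix i assume "i < n"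
        then have zi: "zs i \<in> disc" using zs by blast
        show "\<bar>cmod (lam' i) * cmod (cderiv g (zs' i))\<bar>
            = \<bar>cmod (lam i) * cmod (cderiv (\<lambda>w. g (h w)) (zs i))\<bar>"
          unfolding comp_Ball1(2)[OF g holh hD h0 zi] lam'_def zs'_def by (simp add: norm_mult mult_ac)
      qed
      also have "\<dots> \<le> Wsup p lam zs n" by (rule W_upper[OF p zs gh])
      finally show "lpn p (\<lambda>i. cmod (lam' i) * cmod (cderiv g (zs' i))) n \<le> Wsup p lam zs n" .
    qed
    then have "onorm T * (c * Wsup p lam' zs' n) \<le> onorm T * (c * Wsup p lam zs n)"
      using oT c0 by (intro mult_left_mono) auto
    finally show "lpn p (\<lambda>i. cmod (lam i) * norm (cderiv (\<lambda>w. T (f (h w))) (zs i))) n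
        \<le> onorm T * c * Wsup p lam zs n" by (simp add: mult.assoc)
  qed
  have c1: "0 \<le> onorm T * c" using oT c0 by simp
  show "T \<circ> f \<circ> h \<in> PiB p" unfolding eq PiB_iff using v ps c1 h0 hf(2) T0 by auto
  show "piB p (T \<circ> f \<circ> h) \<le> onorm T * piB p f"
    unfolding eq c_def[symmetric] by (rule piB_le[OF p c1 ps])
qed

lemma PiB_injective:
  assumes p: "1 \<le> p" and f: "f \<in> BlochHat" and I: "cbounded_linear \<iota>" and iso: "\<And>x. norm (\<iota> x) = norm x"
    and If: "\<iota> \<circ> f \<in> PiB p"
  shows "f \<in> PiB p" "piB p f = piB p (\<iota> \<circ> f)"
proof -
  have hf: "vholo f" "f 0 = 0" using f unfolding BlochHat_def by auto
  have eq: "\<iota> \<circ> f = (\<lambda>w. \<iota> (f w))" by (simp add: comp_def)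
  have nd: "norm (cderiv (\<lambda>w. \<iota> (f w)) z) = norm (cderiv f z)" if "z \<in> disc" for z
    using vholo_linear(2)[OF hf(1) I that] iso by simp
  have If': "(\<lambda>w. \<iota> (f w)) \<in> PiB p" using If eq by simp
  have ps1: "psum_cond p f (1 * piB p (\<lambda>w. \<iota> (f w)))"
    by (rule psum_cond_transfer[OF p PiB_psum[OF p If']]) (use nd in auto)
  have c0: "0 \<le> piB p (\<lambda>w. \<iota> (f w))" by (rule PiB_nonneg[OF p If'])
  show fP: "f \<in> PiB p" unfolding PiB_iff using hf ps1 c0 by auto
  have ps2: "psum_cond p (\<lambda>w. \<iota> (f w)) (1 * piB p f)"
    by (rule psum_cond_transfer[OF p PiB_psum[OF p fP]]) (use nd in auto)
  have le1: "piB p f \<le> piB p (\<lambda>w. \<iota> (f w))" using piB_le[OF p _ ps1] c0 by simp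
  have le2: "piB p (\<lambda>w. \<iota> (f w)) \<le> piB p f" using piB_le[OF p _ ps2] PiB_nonneg[OF p fP] by simp
  show "piB p f = piB p (\<iota> \<circ> f)" unfolding eq using le1 le2 by simp
qed

section \<open>Completeness\<close>

lemma PiB_diff:
  assumes p: "1 \<le> p" and f: "f \<in> PiB p" and g: "g \<in> PiB p"
  shows "(\<lambda>z. f z - g z) \<in> PiB p"
proof -
  have "(\<lambda>z. (-1) *\<^sub>C g z) \<in> PiB p" by (rule PiB_scale(1)[OF p g])
  then have "(\<lambda>z. f z + (-1) *\<^sub>C g z) \<in> PiB p" by (rule PiB_add(1)[OF p f])
  then show ?thesis by simp
qed

lemma diff_deriv_bound:
  assumes p: "1 \<le> p" and f: "f \<in> PiB p" and g: "g \<in> PiB p" and z: "z \<in> disc"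
  shows "norm (cderiv f z - cderiv g z) \<le> piB p (\<lambda>z. f z - g z) / (1 - (cmod z)\<^sup>2)"
proof -
  have hf: "vholo f" and hg: "vholo g" using f g unfolding PiB_iff by auto
  have "(1 - (cmod z)\<^sup>2) * norm (cderiv (\<lambda>z. f z - g z) z) \<le> piB p (\<lambda>z. f z - g z)"
    by (rule PiB_deriv_bound[OF p PiB_diff[OF p f g] z])
  then show ?thesis using disc_pos[OF z] vholo_diff(2)[OF hf hg z]
    by (simp add: pos_le_divide_eq mult.commute)
qed

lemma PiB_complete:
  fixes s :: "nat \<Rightarrow> complex \<Rightarrow> 'a::complex_banach"
  assumes p: "1 \<le> p" and sP: "\<And>n. s n \<in> PiB p"
    and cauchy: "\<And>e. e > 0 \<Longrightarrow> \<exists>N. \<forall>m\<ge>N. \<forall>n\<ge>N. piB p (\<lambda>z. s m z - s n z) < e"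
  shows "\<exists>f\<in>PiB p. \<forall>e>0. \<exists>N. \<forall>n\<ge>N. piB p (\<lambda>z. s n z - f z) < e"
proof -
  have hs: "vholo (s n)" "s n 0 = 0" for n using sP[of n] unfolding PiB_iff by auto
  have dcauchy: "\<exists>N. \<forall>m\<ge>N. \<forall>n\<ge>N. \<forall>x. cmod x < r \<longrightarrow> norm (cderiv (s m) x - cderiv (s n) x) < e"
    if e: "e > 0" and r: "r < 1" "0 < r" for e r
  proof -
    have r2: "0 < 1 - r\<^sup>2" using r by (simp add: power_less_one_iff abs_square_less_1)
    obtain N where N: "\<forall>m\<ge>N. \<forall>n\<ge>N. piB p (\<lambda>z. s m z - s n z) < e * (1 - r\<^sup>2)"
      using cauchy[of "e * (1 - r\<^sup>2)"] e r2 by auto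
    show ?thesis
    proof (intro exI allI impI)
      fix m n x assume mn: "N \<le> m" "N \<le> n" and x: "cmod x < r"
      have xd: "x \<in> disc" using x r by simp
      have px: "0 < 1 - (cmod x)\<^sup>2" by (rule disc_pos[OF xd])
      have rx: "1 - r\<^sup>2 \<le> 1 - (cmod x)\<^sup>2" using x by (simp add: power_mono)
      have "norm (cderiv (s m) x - cderiv (s n) x) \<le> piB p (\<lambda>z. s m z - s n z) / (1 - (cmod x)\<^sup>2)"
        by (rule diff_deriv_bound[OF p sP sP xd])
      also have "\<dots> < e * (1 - r\<^sup>2) / (1 - (cmod x)\<^sup>2)"
        using N mn px by (simp add: divide_strict_right_mono)
      also have "\<dots> \<le> e * (1 - (cmod x)\<^sup>2) / (1 - (cmod x)\<^sup>2)"
        using rx e px by (intro divide_right_mono mult_left_mono) auto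
      also have "\<dots> = e" using px by simp
      finally show "norm (cderiv (s m) x - cderiv (s n) x) < e" .
    qed
  qed
  define Dl where "Dl x = lim (\<lambda>n. cderiv (s n) x)" for x
  have Dl: "(\<lambda>n. cderiv (s n) x) \<longlonglongrightarrow> Dl x" if x: "x \<in> disc" for x
  proof -
    define r where "r = (1 + cmod x) / 2"
    have r: "r < 1" "0 < r" "cmod x < r"
    proof -
      have a1: "cmod x < 1" using x by simp
      have a2: "0 \<le> cmod x" by simp
      show "r < 1" "0 < r" "cmod x < r" using a1 a2 unfolding r_def by (simp_all add: add_pos_nonneg)
    qed
    have "Cauchy (\<lambda>n. cderiv (s n) x)"
    proof (rule metric_CauchyI)
      fix e :: real assume "0 < e"
      then obtain N where "\<forall>m\<ge>N. \<forall>n\<ge>N. \<forall>y. cmod y < r \<longrightarrow> norm (cderiv (s m) y - cderiv (s n) y) < e"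
        using dcauchy r by blast
      then show "\<exists>M. \<forall>m\<ge>M. \<forall>n\<ge>M. dist (cderiv (s m) x) (cderiv (s n) x) < e"
        using r by (auto simp: dist_norm)
    qed
    then show ?thesis unfolding Dl_def by (simp add: Cauchy_convergent_iff convergent_LIMSEQ_iff)
  qed
  have dunif: "\<exists>N. \<forall>n\<ge>N. \<forall>x. cmod x < r \<longrightarrow> norm (cderiv (s n) x - Dl x) \<le> e"
    if e: "e > 0" and r: "r < 1" "0 < r" for e r
  proof -
    obtain N where N: "\<forall>m\<ge>N. \<forall>n\<ge>N. \<forall>x. cmod x < r \<longrightarrow> norm (cderiv (s m) x - cderiv (s n) x) < e"
      using dcauchy[OF e r] by blast
    show ?thesis
    proof (intro exI allI impI)
      fix n x assume n: "N \<le> n" and x: "cmod x < r"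
      have xd: "x \<in> disc" using x r by simp
      have "(\<lambda>m. norm (cderiv (s n) x - cderiv (s m) x)) \<longlonglongrightarrow> norm (cderiv (s n) x - Dl x)"
        by (intro tendsto_intros Dl[OF xd])
      then show "norm (cderiv (s n) x - Dl x) \<le> e"
      proof (rule LIMSEQ_le_const2)
        show "\<exists>M. \<forall>m\<ge>M. norm (cderiv (s n) x - cderiv (s m) x) \<le> e"
          using N n x by (intro exI[of _ N]) (auto intro: less_imp_le)
      qed
    qed
  qed
  define F where "F z = lim (\<lambda>n. s n z)" for z
  have F: "(\<lambda>n. s n z) \<longlonglongrightarrow> F z \<and> has_cderiv F (Dl z) z" if z: "z \<in> disc" for z
  proof -
    define r where "r = (1 + cmod z) / 2"
    have r: "r < 1" "0 < r" "cmod z < r"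
    proof -
      have a1: "cmod z < 1" using z by simp
      have a2: "0 \<le> cmod z" by simp
      show "r < 1" "0 < r" "cmod z < r" using a1 a2 unfolding r_def by (simp_all add: add_pos_nonneg)
    qed
    have sub: "ball 0 r \<subseteq> disc" using r by auto
    have "\<exists>g. \<forall>x\<in>ball 0 r. (\<lambda>n. s n x) \<longlonglongrightarrow> g x \<and>
            (g has_derivative (\<lambda>h. h *\<^sub>C Dl x)) (at x within ball 0 r)"
    proof (rule has_derivative_sequence[where f' = "\<lambda>n x h. h *\<^sub>C cderiv (s n) x"])
      show "convex (ball (0::complex) r)" by simp
      show "(s n has_derivative (\<lambda>h. h *\<^sub>C cderiv (s n) x)) (at x within ball 0 r)"
        if "x \<in> ball 0 r" for n x
      proof -
        have "x \<in> disc" using that sub by blast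
        then have "(s n has_derivative (\<lambda>h. h *\<^sub>C cderiv (s n) x)) (at x)"
          using vholo_has_cderiv[OF hs(1), of x n] unfolding has_cderiv_def by blast
        then show ?thesis by (rule has_derivative_at_withinI)
      qed
      show "\<forall>\<^sub>F n in sequentially. \<forall>x\<in>ball 0 r. \<forall>h. norm (h *\<^sub>C cderiv (s n) x - h *\<^sub>C Dl x) \<le> e * norm h"
        if ep: "e > 0" for e
      proof -
        obtain N where N: "\<forall>n\<ge>N. \<forall>x. cmod x < r \<longrightarrow> norm (cderiv (s n) x - Dl x) \<le> e"
          using dunif[OF ep r(1,2)] by blast
        show ?thesis unfolding eventually_sequentially
        proof (intro exI allI impI ballI)
          fix n x h assume "N \<le> n" "x \<in> ball (0::complex) r"
          then have "norm (cderiv (s n) x - Dl x) \<le> e" using N by auto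
          then show "norm (h *\<^sub>C cderiv (s n) x - h *\<^sub>C Dl x) \<le> e * norm h"
            by (simp add: cscale_diff_right[symmetric] norm_cscale mult.commute[of e] mult_left_mono)
        qed
      qed
      show "(0::complex) \<in> ball 0 r" using r by simp
      show "(\<lambda>n. s n 0) \<longlonglongrightarrow> 0" using hs(2) by simp
    qed
    then obtain g where g: "\<And>x. x \<in> ball 0 r \<Longrightarrow> (\<lambda>n. s n x) \<longlonglongrightarrow> g x"
      "\<And>x. x \<in> ball 0 r \<Longrightarrow> (g has_derivative (\<lambda>h. h *\<^sub>C Dl x)) (at x within ball 0 r)"
      by blast
    have Fg: "F x = g x" if "x \<in> ball 0 r" for x
      unfolding F_def using g(1)[OF that] by (rule limI)
    have zb: "z \<in> ball 0 r" using r by simp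
    have "(g has_derivative (\<lambda>h. h *\<^sub>C Dl z)) (at z)"
      using g(2)[OF zb] at_within_open[OF zb open_ball] by simp
    then have "(F has_derivative (\<lambda>h. h *\<^sub>C Dl z)) (at z)"
      by (rule has_derivative_transform_within_open[OF _ open_ball zb]) (use Fg in auto)
    then show ?thesis using g(1)[OF zb] Fg[OF zb] unfolding has_cderiv_def by simp
  qed
  have vF: "vholo F" unfolding vholo_def using F by blast
  have cdF: "cderiv F z = Dl z" if "z \<in> disc" for z using F[OF that] cderiv_eq by blast
  have F0: "F 0 = 0" using F[of 0] hs(2) by (simp add: LIMSEQ_const_iff)
  have conv: "psum_cond p (\<lambda>z. s k z - F z) e \<and> (\<lambda>z. s k z - F z) \<in> PiB p"
    if e: "e > 0" and N: "\<forall>m\<ge>N. \<forall>n\<ge>N. piB p (\<lambda>z. s m z - s n z) < e" and k: "N \<le> k" for e N k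
  proof -
    have vd: "vholo (\<lambda>z. s k z - F z)" by (rule vholo_diff(1)[OF hs(1) vF])
    have cd: "cderiv (\<lambda>z. s k z - F z) z = cderiv (s k) z - Dl z" if "z \<in> disc" for z
      using vholo_diff(2)[OF hs(1) vF that] cdF[OF that] by simp
    have ps: "psum_cond p (\<lambda>z. s k z - F z) e"
      unfolding psum_cond_iff
    proof (intro allI impI)
      fix n :: nat and lam zs :: "nat \<Rightarrow> complex" assume zs: "\<forall>i<n. zs i \<in> disc"
      define L where "L = lpn p (\<lambda>i. cmod (lam i)) n"
      define W where "W = Wsup p lam zs n"
      have L0: "0 \<le> L" unfolding L_def by (rule lpn_nonneg)
      have W0: "0 \<le> W" unfolding W_def by (rule W_nonneg[OF p zs])
      have key: "lpn p (\<lambda>i. cmod (lam i) * norm (cderiv (\<lambda>z. s k z - F z) (zs i))) n \<le> e * W + d * L"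
        if d: "d > 0" for d
      proof -
        have ev: "\<forall>\<^sub>F m in sequentially. \<forall>i\<in>{..<n}. norm (cderiv (s m) (zs i) - Dl (zs i)) < d"
        proof (rule eventually_ball_finite)
          show "\<forall>i\<in>{..<n}. \<forall>\<^sub>F m in sequentially. norm (cderiv (s m) (zs i) - Dl (zs i)) < d"
          proof
            fix i assume "i \<in> {..<n}"
            then have "zs i \<in> disc" using zs by auto
            then have "(\<lambda>m. cderiv (s m) (zs i) - Dl (zs i)) \<longlonglongrightarrow> 0"
              using Dl tendsto_diff[OF Dl tendsto_const, of "zs i" "Dl (zs i)"] by simp
            then show "\<forall>\<^sub>F m in sequentially. norm (cderiv (s m) (zs i) - Dl (zs i)) < d"
              using d by (simp add: tendsto_iff dist_norm)
          qed
        qed simp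
        then obtain M where M: "\<And>m. m \<ge> M \<Longrightarrow> \<forall>i<n. norm (cderiv (s m) (zs i) - Dl (zs i)) < d"
          unfolding eventually_sequentially by auto
        define m where "m = max M N"
        have mM: "m \<ge> M" and mN: "m \<ge> N" unfolding m_def by auto
        have km: "(\<lambda>z. s k z - s m z) \<in> PiB p" by (rule PiB_diff[OF p sP sP])
        have cdkm: "cderiv (\<lambda>z. s k z - s m z) z = cderiv (s k) z - cderiv (s m) z" if "z \<in> disc" for z
          by (rule vholo_diff(2)[OF hs(1) hs(1) that])
        have "lpn p (\<lambda>i. cmod (lam i) * norm (cderiv (\<lambda>z. s k z - F z) (zs i))) n
            \<le> lpn p (\<lambda>i. cmod (lam i) * norm (cderiv (\<lambda>z. s k z - s m z) (zs i)) + d * cmod (lam i)) n"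
        proof (rule lpn_mono[OF p])
          fix i assume i: "i < n"
          then have zi: "zs i \<in> disc" using zs by blast
          have "norm (cderiv (s k) (zs i) - Dl (zs i))
              \<le> norm (cderiv (s k) (zs i) - cderiv (s m) (zs i)) + norm (cderiv (s m) (zs i) - Dl (zs i))"
            by (rule norm_diff_triangle_le) (rule order_refl)+
          also have "\<dots> \<le> norm (cderiv (s k) (zs i) - cderiv (s m) (zs i)) + d"
            using M[OF mM] i by (auto intro: less_imp_le)
          finally have "cmod (lam i) * norm (cderiv (s k) (zs i) - Dl (zs i))
              \<le> cmod (lam i) * (norm (cderiv (s k) (zs i) - cderiv (s m) (zs i)) + d)"
            by (rule mult_left_mono) simp
          then show "\<bar>cmod (lam i) * norm (cderiv (\<lambda>z. s k z - F z) (zs i))\<bar>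
              \<le> \<bar>cmod (lam i) * norm (cderiv (\<lambda>z. s k z - s m z) (zs i)) + d * cmod (lam i)\<bar>"
            using d by (simp add: cd[OF zi] cdkm[OF zi] distrib_left mult.commute)
        qed
        also have "\<dots> \<le> lpn p (\<lambda>i. cmod (lam i) * norm (cderiv (\<lambda>z. s k z - s m z) (zs i))) n
                      + lpn p (\<lambda>i. d * cmod (lam i)) n"
          by (rule lpn_triangle[OF p])
        also have "lpn p (\<lambda>i. d * cmod (lam i)) n = d * L"
          unfolding L_def by (rule lpn_scale[OF p]) (use d in simp)
        also have "lpn p (\<lambda>i. cmod (lam i) * norm (cderiv (\<lambda>z. s k z - s m z) (zs i))) n
            \<le> piB p (\<lambda>z. s k z - s m z) * W"
          using PiB_psum[OF p km] zs unfolding psum_cond_iff W_def by blast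
        also have "piB p (\<lambda>z. s k z - s m z) * W \<le> e * W"
          using N k mN W0 by (intro mult_right_mono) (auto intro: less_imp_le)
        finally show ?thesis by simp
      qed
      show "lpn p (\<lambda>i. cmod (lam i) * norm (cderiv (\<lambda>z. s k z - F z) (zs i))) n \<le> e * Wsup p lam zs n"
        unfolding W_def[symmetric]
      proof (rule field_le_epsilon)
        fix d :: real assume d: "0 < d"
        have "lpn p (\<lambda>i. cmod (lam i) * norm (cderiv (\<lambda>z. s k z - F z) (zs i))) n
            \<le> e * W + (d / (L + 1)) * L"
          using key[of "d / (L + 1)"] d L0 by simp
        also have "(d / (L + 1)) * L \<le> d"
          using d L0 by (simp add: field_simps)
        finally show "lpn p (\<lambda>i. cmod (lam i) * norm (cderiv (\<lambda>z. s k z - F z) (zs i))) n \<le> e * W + d"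
          by simp
      qed
    qed
    have "(\<lambda>z. s k z - F z) \<in> PiB p"
    proof -
      have "\<exists>c\<ge>0. psum_cond p (\<lambda>z. s k z - F z) c" using ps e by (intro exI[of _ e]) simp
      then show ?thesis unfolding PiB_iff using vd hs(2) F0 by simp
    qed
    then show ?thesis using ps by simp
  qed
  obtain N0 where N0: "\<forall>m\<ge>N0. \<forall>n\<ge>N0. piB p (\<lambda>z. s m z - s n z) < 1"
    using cauchy[of 1] by auto
  have sF: "(\<lambda>z. s N0 z - F z) \<in> PiB p" using conv[OF _ N0 order_refl] by simp
  have "(\<lambda>z. s N0 z - (s N0 z - F z)) \<in> PiB p" by (rule PiB_diff[OF p sP sF])
  then have FP: "F \<in> PiB p" by simp
  show ?thesis
  proof (intro bexI[OF _ FP] allI impI)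
    fix e :: real assume e: "e > 0"
    obtain N where N: "\<forall>m\<ge>N. \<forall>n\<ge>N. piB p (\<lambda>z. s m z - s n z) < e / 2"
      using cauchy[of "e / 2"] e by auto
    show "\<exists>N. \<forall>n\<ge>N. piB p (\<lambda>z. s n z - F z) < e"
    proof (intro exI allI impI)
      fix n assume n: "N \<le> n"
      have "psum_cond p (\<lambda>z. s n z - F z) (e / 2)" using conv[of "e / 2" N n] N n e by simp
      then have "piB p (\<lambda>z. s n z - F z) \<le> e / 2" by (rule piB_le[OF p, rotated]) (use e in simp)
      then show "piB p (\<lambda>z. s n z - F z) < e" using e by simp
    qed
  qed
qed

theorem proposition1p2:
  fixes p :: ereal
  assumes "1 \<le> p"
  shows "banach_bloch_ideal_on (PiB p :: (complex \<Rightarrow> 'a::complex_banach) set) (piB p)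
       \<and> bloch_ideal_compose (PiB p :: (complex \<Rightarrow> 'a) set) (piB p)
                             (PiB p :: (complex \<Rightarrow> 'b::complex_banach) set) (piB p)
       \<and> bloch_ideal_injective (PiB p :: (complex \<Rightarrow> 'a) set) (piB p)
                               (PiB p :: (complex \<Rightarrow> 'b) set) (piB p)"
proof (intro conjI)
  note p = assms
  show "banach_bloch_ideal_on (PiB p :: (complex \<Rightarrow> 'a::complex_banach) set) (piB p)"
    unfolding banach_bloch_ideal_on_def
  proof (intro conjI ballI allI impI subsetI)
    show "f \<in> BlochHat" if "f \<in> (PiB p :: (complex \<Rightarrow> 'a) set)" for f using PiB_Bloch(1)[OF p that] .
    show "(\<lambda>z. 0::'a) \<in> PiB p" by (rule PiB_zero(1)[OF p])
    show "(\<lambda>z. f z + g z) \<in> PiB p" if "f \<in> PiB p" "g \<in> (PiB p :: (complex \<Rightarrow> 'a) set)" for f g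
      using PiB_add(1)[OF p that] .
    show "(\<lambda>z. a *\<^sub>C f z) \<in> PiB p" if "f \<in> (PiB p :: (complex \<Rightarrow> 'a) set)" for a f
      using PiB_scale(1)[OF p that] .
    show "(\<lambda>z. g z *\<^sub>C x) \<in> PiB p" if "g \<in> BlochHat" for g :: "complex \<Rightarrow> complex" and x :: 'a
      using PiB_scal(1)[OF p that] .
    show "(piB p f = 0) = (\<forall>z\<in>disc. f z = 0)" if "f \<in> (PiB p :: (complex \<Rightarrow> 'a) set)" for f
      using PiB_zero_iff[OF p that] .
    show "piB p (\<lambda>z. f z + g z) \<le> piB p f + piB p g" if "f \<in> PiB p" "g \<in> (PiB p :: (complex \<Rightarrow> 'a) set)" for f g
      using PiB_add(2)[OF p that] .
    show "piB p (\<lambda>z. a *\<^sub>C f z) = cmod a * piB p f" if "f \<in> (PiB p :: (complex \<Rightarrow> 'a) set)" for a f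
      using PiB_scale(2)[OF p that] .
    show "\<exists>f\<in>PiB p. \<forall>e>0. \<exists>N. \<forall>n\<ge>N. piB p (\<lambda>z. s n z - f z) < e"
      if "(\<forall>n. s n \<in> PiB p) \<and> (\<forall>e>0. \<exists>N. \<forall>m\<ge>N. \<forall>n\<ge>N. piB p (\<lambda>z. s m z - s n z) < e)"
      for s :: "nat \<Rightarrow> complex \<Rightarrow> 'a"
      using PiB_complete[OF p, of s] that by blast
    show "bloch_seminorm f \<le> piB p f" if "f \<in> (PiB p :: (complex \<Rightarrow> 'a) set)" for f
      using PiB_Bloch(2)[OF p that] .
    show "piB p (\<lambda>z. g z *\<^sub>C x) = bloch_seminorm g * norm x" if "g \<in> BlochHat" for g :: "complex \<Rightarrow> complex" and x :: 'a
      using PiB_scal(2)[OF p that] .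
  qed
  show "bloch_ideal_compose (PiB p :: (complex \<Rightarrow> 'a) set) (piB p) (PiB p :: (complex \<Rightarrow> 'b::complex_banach) set) (piB p)"
    unfolding bloch_ideal_compose_def
    using PiB_compose[OF p] by blast
  show "bloch_ideal_injective (PiB p :: (complex \<Rightarrow> 'a) set) (piB p) (PiB p :: (complex \<Rightarrow> 'b) set) (piB p)"
    unfolding bloch_ideal_injective_def
    using PiB_injective[OF p] by blast
qed

end
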